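(* Let $G=(V,E)$ be a connected undirected graph on $n$ nodes with minimum nodal degree $\delta$, let $N_i$ denote the set of neighbours of node $i$, let $K>0$, and let $\bar w_1,\dots,\bar w_n\in\mathbb{R}$ satisfy $\sum_i\bar w_i=0$. Consider solutions $\vec\phi^t\in\mathbb{R}^n$, $t\ge0$, of $$\dot\phi_i=\bar w_i+\frac{K}{n}\sum_{k\in N_i}\sin(\phi_k-\phi_i),\qquad i=1,\dots,n,$$ with initial phases satisfying $\sum_{i=1}^n\phi_i^0=0$. Let $D_0=\max_i\phi_i^0-\min_i\phi_i^0$, $\mathcal{E}_0=\sum_{i=1}^n(\phi_i^0)^2$, $\sigma(\bar w)=\sqrt{\sum_{i=1}^n\bar w_i^2}$, and $$L=\frac{1}{1+\sum_{(k,l)\in E^c}\mathrm{dist}(k,l)},$$ where $E^c$ is the set of unordered pairs of distinct nodes that are not edges of $G$, and $\mathrm{dist}(k,l)$ is the number of edges in a shortest path between $k$ and $l$ in $G$. Suppose $D$ is a constant with $0<D_0\le D\le\frac{\pi}{2}$, that $\mathcal{E}_0<\frac34 D^2$, that $$K\ge\frac{\sigma(\bar w)\, D}{\sqrt{\mathcal{E}_0}\,L\,\sin D},\qquad(\ast)$$ and that $$K\ge\frac{n\,|\bar w_i-\bar w_j|}{2\delta\,\sin\!\Bigl(\frac D2-\sqrt{\mathcal{E}_0-\frac{D^2}{2}}\Bigr)}\quad\text{for all }1\le i,j\le n.$$ Then $D_t:=\max_i\phi_i^t-\min_i\phi_i^t\le D$ for all $t\ge0$ (so the set $\{\vec\phi\in\mathbb{R}^n:\max_{i,j}|\phi_i-\phi_j|\le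 D,\ \sum_i\phi_i=0\}$ is positively invariant for this solution), and the system achieves frequency synchronization, i.e. the solution approaches the set $\{\vec\phi:\dot\phi_i=0,\ 1\le i\le n\}$. Moreover, when $\mathcal{E}_0<\frac{D^2}{2}$, the same conclusion holds assuming only condition $(\ast)$ on $K$ (together with $0<D_0\le D\le\frac\pi2$).
   Context: This is the Kuramoto model in a frame rotating with the mean natural frequency: $\bar w_i=w_i-\frac1n\sum_k w_k$. Along solutions $\sum_i\phi_i^t$ is constant, hence $0$ for all $t$. Frequency synchronization means convergence of the solution to the set of equilibria of this system. *)

theory Defs
  imports "HOL-Analysis.Analysis"
begin

definition undirected_graph :: "('n \<Rightarrow> 'n \<Rightarrow> bool) \<Rightarrow> bool" where
  "undirected_graph E \<longleftrightarrow> (\<forall>k l. E k l \<longrightarrow> E l k) \<and> (\<forall>k. \<not> E k k)"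

definition graph_connected :: "('n \<Rightarrow> 'n \<Rightarrow> bool) \<Rightarrow> bool" where
  "graph_connected E \<longleftrightarrow> (\<forall>k l. E\<^sup>*\<^sup>* k l)"

definition neighbours :: "('n \<Rightarrow> 'n \<Rightarrow> bool) \<Rightarrow> 'n \<Rightarrow> 'n set" where
  "neighbours E i = {k. E i k}"

definition min_degree :: "('n::finite \<Rightarrow> 'n \<Rightarrow> bool) \<Rightarrow> nat" where
  "min_degree E = (MIN i. card (neighbours E i))"

definition graph_dist :: "('n \<Rightarrow> 'n \<Rightarrow> bool) \<Rightarrow> 'n \<Rightarrow> 'n \<Rightarrow> nat" where
  "graph_dist E k l = (LEAST m. (E ^^ m) k l)"

text \<open>Sum of distances over unordered pairs of distinct non-adjacent nodes
  (each unordered pair appears twice among ordered pairs, hence the factor 1/2).\<close>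
definition nonedge_dist_sum :: "('n::finite \<Rightarrow> 'n \<Rightarrow> bool) \<Rightarrow> real" where
  "nonedge_dist_sum E =
     (\<Sum>k\<in>UNIV. \<Sum>l\<in>UNIV. if k \<noteq> l \<and> \<not> E k l then real (graph_dist E k l) else 0) / 2"

definition L_const :: "('n::finite \<Rightarrow> 'n \<Rightarrow> bool) \<Rightarrow> real" where
  "L_const E = 1 / (1 + nonedge_dist_sum E)"

definition kuramoto_rhs ::
  "('n::finite \<Rightarrow> 'n \<Rightarrow> bool) \<Rightarrow> real \<Rightarrow> real^'n \<Rightarrow> real^'n \<Rightarrow> real^'n" where
  "kuramoto_rhs E K w x =
     (\<chi> i. w $ i + K / real CARD('n) * (\<Sum>k\<in>neighbours E i. sin (x $ k - x $ i)))"

definition phase_spread :: "real^'n::finite \<Rightarrow> real" where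
  "phase_spread x = (MAX i. x $ i) - (MIN i. x $ i)"

end

theory Submission
  imports Defs
begin



lemma zcos_le_sin:
  fixes z :: real assumes "0 \<le> z" "z \<le> pi/2"
  shows "z * cos z \<le> sin z"
proof -
  have "(\<lambda>z. sin z - z * cos z) 0 \<le> (\<lambda>z. sin z - z * cos z) z"
  proof (rule DERIV_nonneg_imp_increasing_open[OF assms(1)])
    fix y :: real assume y: "0 < y" "y < z"
    have "DERIV (\<lambda>z. sin z - z * cos z) y :> cos y - (cos y + y * (- sin y))"
      by (auto intro!: derivative_eq_intros)
    moreover have "0 \<le> cos y - (cos y + y * (- sin y))"
      using y assms sin_ge_zero[of y] by simp
    ultimately show "\<exists>d. DERIV (\<lambda>z. sin z - z * cos z) y :> d \<and> 0 \<le> d" by blast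
  next
    show "continuous_on {0..z} (\<lambda>z. sin z - z * cos z)"
      by (intro continuous_intros)
  qed
  then show ?thesis by simp
qed

lemma sin_ratio_mono:
  fixes y D :: real assumes "0 < y" "y \<le> D" "D \<le> pi/2"
  shows "y * sin D \<le> D * sin y"
proof -
  have "(\<lambda>z. sin z / z) D \<le> (\<lambda>z. sin z / z) y"
  proof (rule DERIV_nonpos_imp_nonincreasing[OF assms(2)])
    fix x :: real assume x: "y \<le> x" "x \<le> D"
    have "DERIV (\<lambda>z. sin z / z) x :> (cos x * x - sin x * 1) / (x * x)"
      using x assms by (auto intro!: derivative_eq_intros)
    moreover have "(cos x * x - sin x * 1) / (x * x) \<le> 0"
      using zcos_le_sin[of x] x assms by (intro divide_nonpos_nonneg) (auto simp: mult.commute)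
    ultimately show "\<exists>d. DERIV (\<lambda>z. sin z / z) x :> d \<and> d \<le> 0" by blast
  qed
  then show ?thesis using assms by (simp add: field_simps)
qed

lemma xsin_ge:
  fixes x D :: real assumes "\<bar>x\<bar> \<le> D" "0 < D" "D \<le> pi/2"
  shows "sin D / D * x\<^sup>2 \<le> x * sin x"
proof (cases "x = 0")
  case True then show ?thesis by simp
next
  case False
  have key: "\<bar>x\<bar> * sin D \<le> D * sin \<bar>x\<bar>"
    using sin_ratio_mono[of "\<bar>x\<bar>" D] assms False by auto
  have "x * sin x = \<bar>x\<bar> * sin \<bar>x\<bar>" by (cases "x \<ge> 0") auto
  have e: "sin D / D * x\<^sup>2 = \<bar>x\<bar> * (\<bar>x\<bar> * sin D / D)"
    by (simp add: power2_eq_square abs_mult_self_eq)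
  have "\<bar>x\<bar> * sin D / D \<le> sin \<bar>x\<bar>" using key assms by (simp add: field_simps)
  then have "\<bar>x\<bar> * (\<bar>x\<bar> * sin D / D) \<le> \<bar>x\<bar> * sin \<bar>x\<bar>" by (rule mult_left_mono) simp
  then show ?thesis using e \<open>x * sin x = _\<close> by (simp only:)
qed

lemma cos_ge_quad: fixes y :: real shows "1 - y\<^sup>2 / 2 \<le> cos y"
proof -
  have "cos y = 1 - 2 * (sin (y/2))\<^sup>2"
    using cos_double_sin[of "y/2"] by simp
  moreover have "(sin (y/2))\<^sup>2 \<le> (y/2)\<^sup>2"
    using abs_sin_x_le_abs_x[of "y/2"] by (metis abs_le_square_iff)
  ultimately show ?thesis by (simp add: power2_eq_square field_simps)
qed




lemma cos_le_quart:
  fixes x :: real assumes "0 \<le> x" "x \<le> pi"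
  shows "2 * cos x \<le> 2 - x\<^sup>2 + x^4/4"
proof -
  have c: "cos x = 1 - 2 * (sin (x/2))\<^sup>2" using cos_double_sin[of "x/2"] by simp
  have a: "x/2 * cos (x/2) \<le> sin (x/2)" using zcos_le_sin[of "x/2"] assms by simp
  have cpos: "0 \<le> cos (x/2)" using assms by (intro cos_ge_zero) auto
  have "(x/2 * cos (x/2))\<^sup>2 \<le> (sin (x/2))\<^sup>2"
    using a cpos assms by (intro power_mono) auto
  moreover have "(x/2 * cos (x/2))\<^sup>2 = x\<^sup>2/4 * (1 - (sin (x/2))\<^sup>2)"
    by (simp add: power_mult_distrib cos_squared_eq power_divide)
  moreover have "(sin (x/2))\<^sup>2 \<le> (x/2)\<^sup>2"
    using abs_sin_x_le_abs_x[of "x/2"] by (metis abs_le_square_iff)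
  ultimately have "x\<^sup>2/4 * (1 - x\<^sup>2/4) \<le> (sin (x/2))\<^sup>2"
  proof -
    assume h1: "(x/2 * cos (x/2))\<^sup>2 \<le> (sin (x/2))\<^sup>2"
       and h2: "(x/2 * cos (x/2))\<^sup>2 = x\<^sup>2/4 * (1 - (sin (x/2))\<^sup>2)"
       and h3: "(sin (x/2))\<^sup>2 \<le> (x/2)\<^sup>2"
    have "x\<^sup>2/4 * (1 - x\<^sup>2/4) \<le> x\<^sup>2/4 * (1 - (sin (x/2))\<^sup>2)"
      using h3 by (intro mult_left_mono) (auto simp: power_divide)
    then show ?thesis using h1 h2 by linarith
  qed
  then show ?thesis using c by (simp add: field_simps power2_eq_square power4_eq_xxxx)
qed

lemma pi_lt_16_5: "pi < 16/5"
  using pi_approx by simp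

lemma pair_same:
  fixes D x s u :: real
  assumes D: "0 < D" "D \<le> pi/2" and x: "0 \<le> x" "x < D/2"
    and en: "2 * s\<^sup>2 + u\<^sup>2 \<le> x\<^sup>2"
  shows "2 * sin (D/2 - x) \<le> sin (D/2 + s - u) + sin (D/2 - s + u)"
    and "0 < x \<Longrightarrow> 2 * sin (D/2 - x) < sin (D/2 + s - u) + sin (D/2 - s + u)"
proof -
  define p where "p = u - s"
  define s1 where "s1 = sin (D/2)"
  define c1 where "c1 = cos (D/2)"
  have x1: "x < 4/5" using x D pi_lt_16_5 by linarith
  have s1pos: "0 < s1" unfolding s1_def using D pi_gt3 by (intro sin_gt_zero) auto
  have s1c1: "s1 \<le> c1"
  proof -
    have "sin (D/2) \<le> sin (pi/2 - D/2)" using D by (intro sin_monotone_2pi_le) auto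
    then show ?thesis by (simp add: s1_def c1_def sin_cos_eq)
  qed
  have e1: "sin (D/2 + s - u) = s1 * cos p - c1 * sin p"
    unfolding p_def s1_def c1_def using sin_diff[of "D/2" "u - s"] by (simp add: algebra_simps)
  have e2: "sin (D/2 - s + u) = s1 * cos p + c1 * sin p"
    unfolding p_def s1_def c1_def using sin_add[of "D/2" "u - s"] by (simp add: algebra_simps)
  have e3: "sin (D/2 - x) = s1 * cos x - c1 * sin x"
    unfolding s1_def c1_def by (simp add: sin_diff)
  have pp: "p\<^sup>2 \<le> 3/2 * x\<^sup>2"
  proof -
    have "0 \<le> (u + 2 * s)\<^sup>2" by simp
    then show ?thesis using en unfolding p_def by (simp add: power2_eq_square algebra_simps)
  qed
  have cp: "2 - 3/2 * x\<^sup>2 \<le> 2 * cos p" using cos_ge_quad[of p] pp by simp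
  have cx: "2 * cos x \<le> 2 - x\<^sup>2 + x^4/4" using cos_le_quart[of x] x D by simp
  have sx: "x * (1 - x\<^sup>2/2) \<le> sin x"
  proof -
    have "x * cos x \<le> sin x" using zcos_le_sin[of x] x D by simp
    moreover have "x * (1 - x\<^sup>2/2) \<le> x * cos x" using cos_ge_quad[of x] x by (intro mult_left_mono) auto
    ultimately show ?thesis by linarith
  qed
  have diff: "sin (D/2 + s - u) + sin (D/2 - s + u) - 2 * sin (D/2 - x)
      = s1 * (2 * cos p - 2 * cos x) + 2 * c1 * sin x"
    using e1 e2 e3 by (simp add: algebra_simps)
  have A: "s1 * (2 * cos p - 2 * cos x) \<ge> - c1 * (x\<^sup>2/2 + x^4/4)"
  proof -
    have "2 * cos p - 2 * cos x \<ge> -(x\<^sup>2/2 + x^4/4)" using cp cx by linarith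
    then have "s1 * (2 * cos p - 2 * cos x) \<ge> s1 * (-(x\<^sup>2/2 + x^4/4))"
      using s1pos by (intro mult_left_mono) auto
    moreover have "s1 * (x\<^sup>2/2 + x^4/4) \<le> c1 * (x\<^sup>2/2 + x^4/4)"
      using s1c1 by (intro mult_right_mono) auto
    moreover have "s1 * (-(x\<^sup>2/2 + x^4/4)) = -(s1 * (x\<^sup>2/2 + x^4/4))" by (simp only: mult_minus_right)
    moreover have "- c1 * (x\<^sup>2/2 + x^4/4) = -(c1 * (x\<^sup>2/2 + x^4/4))" by simp
    ultimately show ?thesis by linarith
  qed
  have B: "2 * c1 * sin x \<ge> 2 * c1 * (x * (1 - x\<^sup>2/2))"
    using sx s1pos s1c1 by (intro mult_left_mono) auto
  have q: "x/2 + x^3/4 + x\<^sup>2 < 2"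
  proof -
    have "x^3 \<le> 1" using x x1 by (simp add: power_le_one)
    moreover have "x\<^sup>2 \<le> 1" using x x1 by (simp add: power_le_one)
    ultimately show ?thesis using x1 by linarith
  qed
  have poly: "x\<^sup>2/2 + x^4/4 \<le> 2 * (x * (1 - x\<^sup>2/2))"
  proof -
    have "x * (x/2 + x^3/4 + x\<^sup>2) \<le> x * 2"
      using x q by (intro mult_left_mono) auto
    then show ?thesis
      by (simp add: algebra_simps power2_eq_square power3_eq_cube power4_eq_xxxx)
  qed
  have polys: "0 < x \<Longrightarrow> x\<^sup>2/2 + x^4/4 < 2 * (x * (1 - x\<^sup>2/2))"
  proof -
    assume "0 < x"
    then have "x * (x/2 + x^3/4 + x\<^sup>2) < x * 2" using q by simp
    then show ?thesis
      by (simp add: algebra_simps power2_eq_square power3_eq_cube power4_eq_xxxx)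
  qed
  have c1pos: "0 < c1" using s1pos s1c1 by linarith
  have "c1 * (x\<^sup>2/2 + x^4/4) \<le> c1 * (2 * (x * (1 - x\<^sup>2/2)))"
    using poly c1pos by (intro mult_left_mono) auto
  then show "2 * sin (D/2 - x) \<le> sin (D/2 + s - u) + sin (D/2 - s + u)"
    using diff A B by (simp add: algebra_simps)
  assume "0 < x"
  have "c1 * (x\<^sup>2/2 + x^4/4) < c1 * (2 * (x * (1 - x\<^sup>2/2)))"
    using polys[OF \<open>0<x\<close>] c1pos by (intro mult_strict_left_mono) auto
  then show "2 * sin (D/2 - x) < sin (D/2 + s - u) + sin (D/2 - s + u)"
    using diff A B by (simp add: algebra_simps)
qed

lemma pair_diff:
  fixes D x s u v :: real
  assumes D: "0 < D" "D \<le> pi/2" and x: "0 \<le> x" "x < D/2"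
    and en: "2 * s\<^sup>2 + u\<^sup>2 + v\<^sup>2 \<le> x\<^sup>2"
  shows "2 * sin (D/2 - x) \<le> sin (D/2 + s - u) + sin (D/2 - s + v)"
    and "0 < x \<Longrightarrow> 2 * sin (D/2 - x) < sin (D/2 + s - u) + sin (D/2 - s + v)"
proof -
  define p where "p = u - s"
  define q where "q = s - v"
  define s1 where "s1 = sin (D/2)"
  define c1 where "c1 = cos (D/2)"
  have x1: "x < 4/5" using x D pi_lt_16_5 by linarith
  have s1pos: "0 < s1" unfolding s1_def using D pi_gt3 by (intro sin_gt_zero) auto
  have s1c1: "s1 \<le> c1"
  proof -
    have "sin (D/2) \<le> sin (pi/2 - D/2)" using D by (intro sin_monotone_2pi_le) auto
    then show ?thesis by (simp add: s1_def c1_def sin_cos_eq)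
  qed
  have c1pos: "0 < c1" using s1pos s1c1 by linarith
  have e1: "sin (D/2 + s - u) = s1 * cos p - c1 * sin p"
    unfolding p_def s1_def c1_def using sin_diff[of "D/2" "u - s"] by (simp add: algebra_simps)
  have e2: "sin (D/2 - s + v) = s1 * cos q - c1 * sin q"
    unfolding q_def s1_def c1_def using sin_diff[of "D/2" "s - v"] by (simp add: algebra_simps)
  have e3: "sin (D/2 - x) = s1 * cos x - c1 * sin x"
    unfolding s1_def c1_def by (simp add: sin_diff)
  have pq: "p\<^sup>2 + q\<^sup>2 \<le> 2 * x\<^sup>2"
  proof -
    have "0 \<le> (u + s)\<^sup>2 + (v + s)\<^sup>2" by simp
    then show ?thesis using en unfolding p_def q_def by (simp add: power2_eq_square algebra_simps)
  qed
  have cpq: "2 - x\<^sup>2 \<le> cos p + cos q" using cos_ge_quad[of p] cos_ge_quad[of q] pq by simp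
  have cx: "2 * cos x \<le> 2 - x\<^sup>2 + x^4/4" using cos_le_quart[of x] x D by simp
  define m where "m = (p + q) / 2"
  define r where "r = (p - q) / 2"
  have mm: "m\<^sup>2 \<le> (3/4 * x)\<^sup>2"
  proof -
    have h1: "0 \<le> u * u + v * v + 2 * (u * v)" using zero_le_power2[of "u+v"] by (simp add: power2_eq_square algebra_simps)
    have h2: "u * u + v * v + 2 * (s * s) \<le> x * x" using en by (simp add: power2_eq_square)
    have h3: "0 \<le> s * s" "0 \<le> x * x" by simp_all
    have "16 * (u * u) + 16 * (v * v) \<le> 32 * (u * v) + 36 * (x * x)" using h1 h2 h3 by linarith
    then show ?thesis unfolding m_def p_def q_def by (simp add: power2_eq_square algebra_simps)
  qed
  have rr: "r\<^sup>2 \<le> x\<^sup>2"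
  proof -
    have h1: "0 \<le> (u - v)\<^sup>2 + 2 * (u + s)\<^sup>2 + 2 * (v + s)\<^sup>2" by simp
    then have h1: "0 \<le> 3 * (u * u) + 3 * (v * v) - 2 * (u * v) + 4 * (u * s) + 4 * (v * s) + 4 * (s * s)"
      by (simp add: power2_eq_square algebra_simps)
    have h2: "u * u + v * v + 2 * (s * s) \<le> x * x" using en by (simp add: power2_eq_square)
    have "u * u + v * v + 4 * (s * s) + 2 * (u * v) - 4 * (u * s) - 4 * (v * s) \<le> 4 * (x * x)" using h1 h2 by linarith
    then show ?thesis unfolding r_def p_def q_def by (simp add: power2_eq_square algebra_simps)
  qed
  have mb: "\<bar>m\<bar> \<le> 3/4 * x"
  proof -
    have "\<bar>m\<bar> \<le> \<bar>3/4 * x\<bar>" using mm abs_le_square_iff by blast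
    then show ?thesis using x by simp
  qed
  have rb: "\<bar>r\<bar> \<le> x"
  proof -
    have "\<bar>r\<bar> \<le> \<bar>x\<bar>" using rr abs_le_square_iff by blast
    then show ?thesis using x by simp
  qed
  have pi2: "x < pi/2" using x D pi_gt3 by linarith
  have cr: "0 \<le> cos r" "cos r \<le> 1" using rb pi2 by (auto intro!: cos_ge_zero)
  have spq: "sin p + sin q = 2 * sin m * cos r"
    unfolding m_def r_def by (simp add: sin_plus_sin)
  have sm: "sin m \<le> sin (3/4 * x)" using mb pi2 by (intro sin_monotone_2pi_le) auto
  have s34: "0 \<le> sin (3/4 * x)" using x pi2 by (intro sin_ge_zero) auto
  have spq_le: "sin p + sin q \<le> 2 * sin (3/4 * x)"
  proof (cases "sin m \<le> 0")
    case True
    then have "sin m * cos r \<le> 0" using cr by (simp add: mult_nonpos_nonneg)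
    then show ?thesis using spq s34 by linarith
  next
    case False
    then have "sin m * cos r \<le> sin m * 1" using cr by (intro mult_left_mono) auto
    then show ?thesis using spq sm by linarith
  qed
  have sdiff: "sin x - sin (3/4 * x) = 2 * sin (x/8) * cos (7/8 * x)"
  proof -
    have a1: "(x - 3/4 * x) / 2 = x/8" and a2: "(x + 3/4 * x) / 2 = 7/8 * x" by simp_all
    show ?thesis using sin_diff_sin[of x "3/4 * x"] unfolding a1 a2 .
  qed
  have xx: "x * x \<le> 4/5 * (4/5)" using x x1 by (intro mult_mono) auto
  have sx8: "9/80 * x \<le> sin (x/8)"
  proof -
    have h: "x/8 * cos (x/8) \<le> sin (x/8)" using zcos_le_sin[of "x/8"] x pi2 by simp
    have "(x/8)\<^sup>2 \<le> 1/5" using xx by (simp add: power2_eq_square)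
    then have "9/10 \<le> cos (x/8)" using cos_ge_quad[of "x/8"] by linarith
    then have "x/8 * (9/10) \<le> x/8 * cos (x/8)" using x by (intro mult_left_mono) auto
    then show ?thesis using h by linarith
  qed
  have c78: "3/4 \<le> cos (7/8 * x)"
  proof -
    have "(7/8 * x)\<^sup>2 \<le> 1/2" using xx by (simp add: power2_eq_square)
    then show ?thesis using cos_ge_quad[of "7/8 * x"] by linarith
  qed
  have s8pos: "0 \<le> sin (x/8)" using sx8 x by linarith
  have prod: "9/80 * x * (3/4) \<le> sin (x/8) * cos (7/8 * x)"
    using sx8 c78 x s8pos by (intro mult_mono) auto
  have diff: "sin (D/2 + s - u) + sin (D/2 - s + v) - 2 * sin (D/2 - x)
      = s1 * (cos p + cos q - 2 * cos x) + c1 * (2 * sin x - (sin p + sin q))"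
    using e1 e2 e3 by (simp add: algebra_simps)
  have A: "s1 * (cos p + cos q - 2 * cos x) \<ge> - (c1 * (x^4/4))"
  proof -
    have "cos p + cos q - 2 * cos x \<ge> -(x^4/4)" using cpq cx by linarith
    then have "s1 * (cos p + cos q - 2 * cos x) \<ge> s1 * (-(x^4/4))"
      using s1pos by (intro mult_left_mono) auto
    moreover have "s1 * (x^4/4) \<le> c1 * (x^4/4)"
      using s1c1 by (intro mult_right_mono) auto
    moreover have "s1 * (-(x^4/4)) = -(s1 * (x^4/4))" by (simp only: mult_minus_right)
    ultimately show ?thesis by linarith
  qed
  have Bq: "2 * sin x - (sin p + sin q) \<ge> 27/80 * x"
    using spq_le sdiff prod by linarith
  have B: "c1 * (2 * sin x - (sin p + sin q)) \<ge> c1 * (27/80 * x)"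
    using Bq c1pos by (intro mult_left_mono) auto
  have q4: "x^4/4 \<le> 27/80 * x" and q4s: "0 < x \<Longrightarrow> x^4/4 < 27/80 * x"
  proof -
    have "x^3 \<le> (4/5)^3" using x x1 by (intro power_mono) auto
    moreover have "((4::real)/5)^3 = 64/125" by (simp add: power3_eq_cube)
    ultimately have h: "x^3/4 < 27/80" by linarith
    have "x * (x^3/4) \<le> x * (27/80)" using h x by (intro mult_left_mono) auto
    then show "x^4/4 \<le> 27/80 * x" by (simp add: power4_eq_xxxx power3_eq_cube algebra_simps)
    assume "0 < x"
    then have "x * (x^3/4) < x * (27/80)" using h by simp
    then show "x^4/4 < 27/80 * x" by (simp add: power4_eq_xxxx power3_eq_cube algebra_simps)
  qed
  have "c1 * (x^4/4) \<le> c1 * (27/80 * x)" using q4 c1pos by (intro mult_left_mono) auto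
  then show "2 * sin (D/2 - x) \<le> sin (D/2 + s - u) + sin (D/2 - s + v)"
    using diff A B by linarith
  assume "0 < x"
  have "c1 * (x^4/4) < c1 * (27/80 * x)" using q4s[OF \<open>0<x\<close>] c1pos by simp
  then show "2 * sin (D/2 - x) < sin (D/2 + s - u) + sin (D/2 - s + v)"
    using diff A B by linarith
qed




lemma walk_of_relpowp:
  "(R ^^ m) k l \<Longrightarrow> \<exists>v. v 0 = k \<and> v m = l \<and> (\<forall>j<m. R (v j) (v (Suc j)))"
proof (induction m arbitrary: l)
  case 0 then show ?case by (intro exI[of _ "\<lambda>_. k"]) auto
next
  case (Suc m)
  from Suc.prems obtain y where y: "(R ^^ m) k y" "R y l" by (rule relpowp_Suc_E)
  from Suc.IH[OF y(1)] obtain v where v: "v 0 = k" "v m = y" "\<forall>j<m. R (v j) (v (Suc j))" by blast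
  show ?case
  proof (intro exI[of _ "v(Suc m := l)"] conjI allI impI)
    fix j assume "j < Suc m"
    then show "R ((v(Suc m := l)) j) ((v(Suc m := l)) (Suc j))"
      using v y by (cases "j = m") auto
  qed (use v in auto)
qed

lemma relpowp_of_walk:
  "v 0 = k \<Longrightarrow> (\<forall>j<m. R (v j) (v (Suc j))) \<Longrightarrow> (R ^^ m) k (v m)"
proof (induction m)
  case 0 then show ?case by simp
next
  case (Suc m)
  then have "(R ^^ m) k (v m)" by simp
  moreover have "R (v m) (v (Suc m))" using Suc.prems by simp
  ultimately show ?case by (rule relpowp_Suc_I)
qed

lemma shortest_walk:
  assumes "(R ^^ m0) k l"
  defines "m \<equiv> (LEAST m. (R ^^ m) k l)"
  shows "\<exists>v. v 0 = k \<and> v m = l \<and> (\<forall>j<m. R (v j) (v (Suc j))) \<and> inj_on v {..m}"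
proof -
  have Rm: "(R ^^ m) k l" unfolding m_def using assms(1) by (rule LeastI)
  obtain v where v: "v 0 = k" "v m = l" "\<forall>j<m. R (v j) (v (Suc j))"
    using walk_of_relpowp[OF Rm] by blast
  have "inj_on v {..m}"
  proof (rule inj_onI, rule ccontr)
    fix a b assume ab: "a \<in> {..m}" "b \<in> {..m}" "v a = v b" "a \<noteq> b"
    define i where "i = min a b"
    define j where "j = max a b"
    have ij: "i < j" "j \<le> m" "v i = v j" using ab unfolding i_def j_def by (auto simp: min_def max_def)
    define v' where "v' t = (if t \<le> i then v t else v (t + (j - i)))" for t
    define m' where "m' = m - (j - i)"
    have walk': "\<forall>t<m'. R (v' t) (v' (Suc t))"
    proof (intro allI impI)
      fix t assume t: "t < m'"
      show "R (v' t) (v' (Suc t))"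
      proof (cases "t < i")
        case True then show ?thesis using v(3) ij t unfolding v'_def m'_def by auto
      next
        case False
        have "v' t = v (t + (j - i))" unfolding v'_def using False ij by (cases "t = i") auto
        moreover have "v' (Suc t) = v (Suc (t + (j - i)))" unfolding v'_def using False by auto
        moreover have "t + (j - i) < m" using t ij unfolding m'_def by auto
        ultimately show ?thesis using v(3) by simp
      qed
    qed
    have "v' m' = l"
    proof (cases "m' \<le> i")
      case True
      then have "m \<le> j" using ij unfolding m'_def by auto
      then have "j = m" "i = m'" using ij True unfolding m'_def by auto
      then show ?thesis unfolding v'_def using ij v by auto
    next
      case False
      then show ?thesis unfolding v'_def m'_def using ij v by auto
    qed
    moreover have "v' 0 = k" unfolding v'_def using v by simp
    ultimately have "(R ^^ m') k l" using relpowp_of_walk[of v' k m' R] walk' by simp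
    moreover have "m' < m" unfolding m'_def using ij by auto
    ultimately show False using not_less_Least[of m' "\<lambda>m. (R ^^ m) k l"] unfolding m_def by blast
  qed
  then show ?thesis using v by blast
qed

lemma sum_sq_le_card:
  fixes d :: "'a \<Rightarrow> real"
  assumes "finite A"
  shows "(\<Sum>i\<in>A. d i)\<^sup>2 \<le> real (card A) * (\<Sum>i\<in>A. (d i)\<^sup>2)"
proof -
  have "(\<Sum>i\<in>A. d i)\<^sup>2 = (\<Sum>i\<in>A. \<Sum>j\<in>A. d i * d j)"
    by (simp add: power2_eq_square sum_product)
  also have "\<dots> \<le> (\<Sum>i\<in>A. \<Sum>j\<in>A. ((d i)\<^sup>2 + (d j)\<^sup>2) / 2)"
  proof (intro sum_mono)
    fix i j
    have "0 \<le> (d i - d j)\<^sup>2" by simp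
    then show "d i * d j \<le> ((d i)\<^sup>2 + (d j)\<^sup>2) / 2" by (simp add: power2_eq_square algebra_simps)
  qed
  also have "\<dots> = real (card A) * (\<Sum>i\<in>A. (d i)\<^sup>2)"
    by (simp add: sum.distrib add_divide_distrib sum_divide_distrib[symmetric] sum_distrib_left[symmetric]
        sum.swap[of "\<lambda>i j. (d j)\<^sup>2 / 2"] sum_distrib_right[symmetric])
  finally show ?thesis .
qed

lemma sum_edges_conv:
  fixes g :: "'a::finite \<Rightarrow> 'a \<Rightarrow> real"
  shows "(\<Sum>a\<in>UNIV. \<Sum>b\<in>UNIV. if R a b then g a b else 0) = (\<Sum>p\<in>{p. R (fst p) (snd p)}. g (fst p) (snd p))"
proof -
  have "(\<Sum>a\<in>UNIV. \<Sum>b\<in>UNIV. if R a b then g a b else 0)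
      = (\<Sum>p\<in>UNIV \<times> UNIV. if R (fst p) (snd p) then g (fst p) (snd p) else 0)"
    by (simp add: sum.cartesian_product case_prod_beta)
  also have "\<dots> = (\<Sum>p\<in>{p. R (fst p) (snd p)}. g (fst p) (snd p))"
    by (simp add: sum.If_cases Collect_conj_eq[symmetric] UNIV_Times_UNIV)
  finally show ?thesis .
qed

lemma walk_edge_sum:
  fixes g :: "'a::finite \<Rightarrow> 'a \<Rightarrow> real"
  assumes gsym: "\<And>a b. g a b = g b a" and gnn: "\<And>a b. 0 \<le> g a b"
    and Rsym: "\<And>a b. R a b \<Longrightarrow> R b a"
    and walk: "\<forall>j<m. R (v j) (v (Suc j))" and inj: "inj_on v {..m}"
  shows "2 * (\<Sum>j<m. g (v j) (v (Suc j))) \<le> (\<Sum>a\<in>UNIV. \<Sum>b\<in>UNIV. if R a b then g a b else 0)"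
proof -
  define f where "f j = (v j, v (Suc j))" for j
  define S where "S = f ` {..<m}"
  define S' where "S' = prod.swap ` S"
  define G where "G p = g (fst p) (snd p)" for p
  have injf: "inj_on f {..<m}"
  proof (rule inj_onI)
    fix i j assume "i \<in> {..<m}" "j \<in> {..<m}" "f i = f j"
    then show "i = j" using inj unfolding f_def by (auto dest: inj_onD)
  qed
  have s1: "(\<Sum>j<m. g (v j) (v (Suc j))) = (\<Sum>p\<in>S. G p)"
    unfolding S_def using sum.reindex[OF injf, of G] by (simp add: G_def f_def)
  have s2: "(\<Sum>p\<in>S'. G p) = (\<Sum>p\<in>S. G p)"
    unfolding S'_def by (subst sum.reindex) (auto simp: G_def gsym intro: inj_onI)
  have disj: "S \<inter> S' = {}"
  proof (rule ccontr)
    assume "S \<inter> S' \<noteq> {}"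
    then obtain p where p: "p \<in> S" "p \<in> S'" by blast
    then obtain i where i: "i < m" "p = f i" unfolding S_def by auto
    from p obtain j where j: "j < m" "p = prod.swap (f j)" unfolding S'_def S_def by auto
    have ij: "i < m" "j < m" "f i = prod.swap (f j)" using i j by auto
    then have "v i = v (Suc j)" "v (Suc i) = v j" unfolding f_def by auto
    then have "i = Suc j" "Suc i = j" using inj ij by (auto dest: inj_onD)
    then show False by simp
  qed
  have sub: "S \<union> S' \<subseteq> {p. R (fst p) (snd p)}"
    unfolding S_def S'_def f_def using walk Rsym by auto
  have "2 * (\<Sum>p\<in>S. G p) = (\<Sum>p\<in>S \<union> S'. G p)"
    using sum.union_disjoint[of S S' G] disj s2 by simp
  also have "\<dots> \<le> (\<Sum>p\<in>{p. R (fst p) (snd p)}. G p)"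
    using sub by (intro sum_mono2) (auto simp: G_def gnn)
  finally show ?thesis using s1 sum_edges_conv[of R g] by (simp add: G_def)
qed

definition edge_sq :: "('n::finite \<Rightarrow> 'n \<Rightarrow> bool) \<Rightarrow> ('n \<Rightarrow> real) \<Rightarrow> real" where
  "edge_sq R x = (\<Sum>a\<in>UNIV. \<Sum>b\<in>UNIV. if R a b then (x a - x b)\<^sup>2 else 0)"

lemma dist_bound:
  fixes x :: "'n::finite \<Rightarrow> real"
  assumes Rsym: "\<And>a b. R a b \<Longrightarrow> R b a" and conn: "\<And>k l. R\<^sup>*\<^sup>* k l"
  shows "(x k - x l)\<^sup>2 \<le> real (graph_dist R k l) * edge_sq R x / 2"
proof -
  obtain m0 where "(R ^^ m0) k l" using rtranclp_imp_relpowp[OF conn[of k l]] by blast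
  from shortest_walk[OF this] obtain v where v: "v 0 = k" "v (graph_dist R k l) = l"
     "\<forall>j<graph_dist R k l. R (v j) (v (Suc j))" "inj_on v {..graph_dist R k l}"
    unfolding graph_dist_def by blast
  define m where "m = graph_dist R k l"
  have tel: "x l - x k = (\<Sum>j<m. x (v (Suc j)) - x (v j))"
    using sum_lessThan_telescope[of "\<lambda>j. x (v j)" m] v unfolding m_def by simp
  have "(x k - x l)\<^sup>2 = (\<Sum>j<m. x (v (Suc j)) - x (v j))\<^sup>2"
    using tel power2_commute[of "x k" "x l"] by simp
  also have "\<dots> \<le> real m * (\<Sum>j<m. (x (v (Suc j)) - x (v j))\<^sup>2)"
    using sum_sq_le_card[of "{..<m}"] by simp
  also have "(\<Sum>j<m. (x (v (Suc j)) - x (v j))\<^sup>2) = (\<Sum>j<m. (\<lambda>a b. (x a - x b)\<^sup>2) (v j) (v (Suc j)))"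
    by (simp add: power2_commute)
  also have "real m * \<dots> \<le> real m * (edge_sq R x / 2)"
  proof (intro mult_left_mono)
    have "2 * (\<Sum>j<m. (\<lambda>a b. (x a - x b)\<^sup>2) (v j) (v (Suc j))) \<le> edge_sq R x"
      unfolding edge_sq_def
      by (rule walk_edge_sum[where R=R]) (use v Rsym in \<open>auto simp: m_def power2_commute\<close>)
    then show "(\<Sum>j<m. (\<lambda>a b. (x a - x b)\<^sup>2) (v j) (v (Suc j))) \<le> edge_sq R x / 2" by simp
  qed simp
  finally show ?thesis unfolding m_def by simp
qed

lemma all_pairs_sq:
  fixes x :: "'n::finite \<Rightarrow> real"
  shows "(\<Sum>a\<in>UNIV. \<Sum>b\<in>UNIV. (x a - x b)\<^sup>2) = 2 * real CARD('n) * (\<Sum>a\<in>UNIV. (x a)\<^sup>2) - 2 * (\<Sum>a\<in>UNIV. x a)\<^sup>2"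
proof -
  have "(\<Sum>a\<in>UNIV. \<Sum>b\<in>UNIV. (x a - x b)\<^sup>2) = (\<Sum>a\<in>UNIV. \<Sum>b\<in>UNIV. (x a)\<^sup>2 + (x b)\<^sup>2 - 2 * (x a * x b))"
    by (simp add: power2_eq_square algebra_simps)
  also have "\<dots> = (\<Sum>a\<in>UNIV. real CARD('n) * (x a)\<^sup>2 + (\<Sum>b\<in>UNIV. (x b)\<^sup>2) - 2 * (x a * (\<Sum>b\<in>UNIV. x b)))"
    by (intro sum.cong refl) (simp add: sum.distrib sum_subtractf sum_distrib_left)
  also have "\<dots> = 2 * real CARD('n) * (\<Sum>a\<in>UNIV. (x a)\<^sup>2) - 2 * (\<Sum>a\<in>UNIV. x a)\<^sup>2"
    by (simp add: sum.distrib sum_subtractf sum_distrib_left[symmetric] sum_distrib_right[symmetric] power2_eq_square)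
  finally show ?thesis .
qed

lemma all_pairs_le:
  fixes x :: "'n::finite \<Rightarrow> real"
  assumes Rsym: "\<And>a b. R a b \<Longrightarrow> R b a" and conn: "\<And>k l. R\<^sup>*\<^sup>* k l"
  shows "(\<Sum>a\<in>UNIV. \<Sum>b\<in>UNIV. (x a - x b)\<^sup>2) \<le> (1 + nonedge_dist_sum R) * edge_sq R x"
proof -
  have split: "(x a - x b)\<^sup>2 = (if R a b then (x a - x b)\<^sup>2 else 0) + (if a \<noteq> b \<and> \<not> R a b then (x a - x b)\<^sup>2 else 0)" for a b
    by auto
  have "(\<Sum>a\<in>UNIV. \<Sum>b\<in>UNIV. (x a - x b)\<^sup>2) = edge_sq R x + (\<Sum>a\<in>UNIV. \<Sum>b\<in>UNIV. if a \<noteq> b \<and> \<not> R a b then (x a - x b)\<^sup>2 else 0)"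
    unfolding edge_sq_def by (subst split) (simp add: sum.distrib)
  also have "(\<Sum>a\<in>UNIV. \<Sum>b\<in>UNIV. if a \<noteq> b \<and> \<not> R a b then (x a - x b)\<^sup>2 else 0)
      \<le> (\<Sum>a\<in>UNIV. \<Sum>b\<in>UNIV. if a \<noteq> b \<and> \<not> R a b then real (graph_dist R a b) * edge_sq R x / 2 else 0)"
    using dist_bound[OF Rsym conn] by (intro sum_mono) auto
  also have "\<dots> = (\<Sum>a\<in>UNIV. \<Sum>b\<in>UNIV. (if a \<noteq> b \<and> \<not> R a b then real (graph_dist R a b) else 0) * edge_sq R x / 2)"
    by (intro sum.cong refl) auto
  also have "\<dots> = nonedge_dist_sum R * edge_sq R x"
    unfolding nonedge_dist_sum_def
    by (simp add: sum_distrib_right[symmetric] sum_divide_distrib[symmetric])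
  finally show ?thesis by (simp add: algebra_simps)
qed




lemma nb_sum: "(\<Sum>k\<in>neighbours E i. f k) = (\<Sum>k\<in>UNIV. if E i k then f k else (0::real))"
  for E :: "'n::finite \<Rightarrow> 'n \<Rightarrow> bool"
  unfolding neighbours_def by (simp add: sum.If_cases)

lemma antisym_sum_zero:
  fixes E :: "'n::finite \<Rightarrow> 'n \<Rightarrow> bool" and f :: "'n \<Rightarrow> 'n \<Rightarrow> real"
  assumes Esym: "\<And>a b. E a b \<longleftrightarrow> E b a" and anti: "\<And>a b. f a b = - f b a"
  shows "(\<Sum>i\<in>UNIV. \<Sum>k\<in>UNIV. if E i k then f i k else 0) = 0"
proof -
  let ?S = "(\<Sum>i\<in>UNIV. \<Sum>k\<in>UNIV. if E i k then f i k else 0)"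
  have "?S = (\<Sum>k\<in>UNIV. \<Sum>i\<in>UNIV. if E i k then f i k else 0)" by (rule sum.swap)
  also have "\<dots> = (\<Sum>k\<in>UNIV. \<Sum>i\<in>UNIV. - (if E k i then f k i else 0))"
  proof (intro sum.cong refl)
    fix k i
    show "(if E i k then f i k else 0) = - (if E k i then f k i else 0)"
      using Esym[of i k] anti[of i k] by simp
  qed
  also have "\<dots> = - ?S" by (simp add: sum_negf)
  finally show ?thesis by simp
qed

lemma rhs_sum:
  fixes E :: "'n::finite \<Rightarrow> 'n \<Rightarrow> bool"
  assumes Esym: "\<And>a b. E a b \<longleftrightarrow> E b a"
  shows "(\<Sum>i\<in>UNIV. kuramoto_rhs E K w x $ i) = (\<Sum>i\<in>UNIV. w $ i)"
proof -
  have z: "(\<Sum>i\<in>UNIV. \<Sum>k\<in>UNIV. if E i k then sin (x $ k - x $ i) else 0) = 0"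
    by (rule antisym_sum_zero[OF Esym]) (simp add: sin_minus[symmetric])
  have "(\<Sum>i\<in>UNIV. kuramoto_rhs E K w x $ i) = (\<Sum>i\<in>UNIV. w $ i) + K / real CARD('n) *
       (\<Sum>i\<in>UNIV. \<Sum>k\<in>UNIV. if E i k then sin (x $ k - x $ i) else 0)"
    unfolding kuramoto_rhs_def nb_sum by (simp add: sum.distrib sum_distrib_left)
  then show ?thesis using z by simp
qed

lemma rhs_dot:
  fixes E :: "'n::finite \<Rightarrow> 'n \<Rightarrow> bool"
  assumes Esym: "\<And>a b. E a b \<longleftrightarrow> E b a"
  shows "(\<Sum>i\<in>UNIV. x $ i * kuramoto_rhs E K w x $ i) = (\<Sum>i\<in>UNIV. x $ i * w $ i)
     - K / (2 * real CARD('n)) * (\<Sum>i\<in>UNIV. \<Sum>k\<in>UNIV. if E i k then (x $ k - x $ i) * sin (x $ k - x $ i) else 0)"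
proof -
  define T where "T = (\<Sum>i\<in>UNIV. \<Sum>k\<in>UNIV. if E i k then x $ i * sin (x $ k - x $ i) else 0)"
  define Q where "Q = (\<Sum>i\<in>UNIV. \<Sum>k\<in>UNIV. if E i k then (x $ k - x $ i) * sin (x $ k - x $ i) else 0)"
  have z: "(\<Sum>i\<in>UNIV. \<Sum>k\<in>UNIV. if E i k then (x $ i + x $ k) * sin (x $ k - x $ i) else 0) = 0"
  proof (rule antisym_sum_zero[OF Esym])
    fix a b
    have "sin (x $ b - x $ a) = - sin (x $ a - x $ b)" using sin_minus[of "x $ a - x $ b"] by simp
    then show "(x $ a + x $ b) * sin (x $ b - x $ a) = - ((x $ b + x $ a) * sin (x $ a - x $ b))"
      by (simp add: algebra_simps)
  qed
  have "(\<Sum>i\<in>UNIV. \<Sum>k\<in>UNIV. if E i k then (x $ i + x $ k) * sin (x $ k - x $ i) else 0)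
      = 2 * T + Q"
  proof -
    have "(\<Sum>i\<in>UNIV. \<Sum>k\<in>UNIV. if E i k then (x $ i + x $ k) * sin (x $ k - x $ i) else 0)
      = (\<Sum>i\<in>UNIV. \<Sum>k\<in>UNIV. 2 * (if E i k then x $ i * sin (x $ k - x $ i) else 0)
                     + (if E i k then (x $ k - x $ i) * sin (x $ k - x $ i) else 0))"
      by (intro sum.cong refl) (auto simp: algebra_simps)
    then show ?thesis unfolding T_def Q_def by (simp add: sum.distrib sum_distrib_left)
  qed
  with z have TQ: "T = - Q / 2" by simp
  have "(\<Sum>i\<in>UNIV. x $ i * kuramoto_rhs E K w x $ i)
      = (\<Sum>i\<in>UNIV. x $ i * w $ i) + K / real CARD('n) * T"
  proof -
    have "x $ i * kuramoto_rhs E K w x $ i = x $ i * w $ i + K / real CARD('n) *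
        (\<Sum>k\<in>UNIV. if E i k then x $ i * sin (x $ k - x $ i) else 0)" for i
    proof -
      have "(\<Sum>k\<in>UNIV. if E i k then x $ i * sin (x $ k - x $ i) else 0)
          = x $ i * (\<Sum>k\<in>UNIV. if E i k then sin (x $ k - x $ i) else 0)"
        by (subst sum_distrib_left) (intro sum.cong refl, simp)
      then show ?thesis unfolding kuramoto_rhs_def nb_sum by (simp add: algebra_simps)
    qed
    then show ?thesis unfolding T_def by (simp add: sum.distrib sum_distrib_left)
  qed
  then show ?thesis unfolding Q_def[symmetric] using TQ by simp
qed

lemma norm_sq_vec: "(norm x)\<^sup>2 = (\<Sum>i\<in>UNIV. (x $ i)\<^sup>2)" for x :: "real^'n::finite"
proof -
  have "(norm x)\<^sup>2 = inner x x" by (rule power2_norm_eq_inner)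
  also have "\<dots> = (\<Sum>i\<in>UNIV. (x $ i)\<^sup>2)" unfolding inner_vec_def inner_real_def by (simp add: power2_eq_square)
  finally show ?thesis .
qed

lemma dot_le: "(\<Sum>i\<in>UNIV. x $ i * w $ i) \<le> norm x * norm w" for x w :: "real^'n::finite"
  using norm_cauchy_schwarz[of x w] by (simp add: inner_vec_def)

lemma nonedge_nonneg: "0 \<le> nonedge_dist_sum E"
  unfolding nonedge_dist_sum_def by (auto intro!: sum_nonneg divide_nonneg_nonneg)

lemma L_pos: "0 < L_const E"
  unfolding L_const_def using nonedge_nonneg[of E] by simp

lemma edge_sq_lower:
  fixes E :: "'n::finite \<Rightarrow> 'n \<Rightarrow> bool" and x :: "real^'n"
  assumes Esym: "\<And>a b. E a b \<longleftrightarrow> E b a" and conn: "\<And>k l. E\<^sup>*\<^sup>* k l"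
    and sum0: "(\<Sum>i\<in>UNIV. x $ i) = 0"
  shows "2 * real CARD('n) * L_const E * (norm x)\<^sup>2 \<le> edge_sq E (\<lambda>i. x $ i)"
proof -
  have "2 * real CARD('n) * (norm x)\<^sup>2 \<le> (1 + nonedge_dist_sum E) * edge_sq E (\<lambda>i. x $ i)"
    using all_pairs_le[of E "\<lambda>i. x $ i"] all_pairs_sq[of "\<lambda>i. x $ i"] Esym conn sum0
    by (simp add: norm_sq_vec)
  moreover have "0 < 1 + nonedge_dist_sum E" using nonedge_nonneg[of E] by simp
  ultimately show ?thesis unfolding L_const_def by (simp add: field_simps)
qed

lemma energy_bound:
  fixes E :: "'n::finite \<Rightarrow> 'n \<Rightarrow> bool" and x w :: "real^'n"
  assumes Esym: "\<And>a b. E a b \<longleftrightarrow> E b a" and conn: "\<And>k l. E\<^sup>*\<^sup>* k l"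
    and sum0: "(\<Sum>i\<in>UNIV. x $ i) = 0" and D: "0 < D" "D \<le> pi/2"
    and spread: "\<And>i k. \<bar>x $ k - x $ i\<bar> \<le> D" and K: "0 < K"
  shows "(\<Sum>i\<in>UNIV. x $ i * kuramoto_rhs E K w x $ i)
     \<le> norm x * norm w - K * L_const E * (sin D / D) * (norm x)\<^sup>2"
proof -
  define Q where "Q = (\<Sum>i\<in>UNIV. \<Sum>k\<in>UNIV. if E i k then (x $ k - x $ i) * sin (x $ k - x $ i) else 0)"
  have "sin D / D * edge_sq E (\<lambda>i. x $ i) = (\<Sum>i\<in>UNIV. \<Sum>k\<in>UNIV. if E i k then sin D / D * (x $ k - x $ i)\<^sup>2 else 0)"
    unfolding edge_sq_def sum_distrib_left by (intro sum.cong refl) (auto simp: power2_commute)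
  also have "\<dots> \<le> Q"
    unfolding Q_def using xsin_ge[OF spread D(1) D(2)] by (intro sum_mono) auto
  finally have Q1: "sin D / D * edge_sq E (\<lambda>i. x $ i) \<le> Q" .
  have sD: "0 \<le> sin D / D" using D by (intro divide_nonneg_pos sin_ge_zero) auto
  have "sin D / D * (2 * real CARD('n) * L_const E * (norm x)\<^sup>2) \<le> sin D / D * edge_sq E (\<lambda>i. x $ i)"
    using edge_sq_lower[OF Esym conn sum0] sD by (intro mult_left_mono) auto
  with Q1 have "sin D / D * (2 * real CARD('n) * L_const E * (norm x)\<^sup>2) \<le> Q" by linarith
  then have "K * (sin D / D * (2 * real CARD('n) * L_const E * (norm x)\<^sup>2)) \<le> K * Q"
    using K by (intro mult_left_mono) auto
  then have Q2: "2 * real CARD('n) * (K * L_const E * (sin D / D) * (norm x)\<^sup>2) \<le> K * Q"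
    by (simp add: algebra_simps)
  have n0: "0 < real CARD('n)" by simp
  have Q3: "K * L_const E * (sin D / D) * (norm x)\<^sup>2 \<le> K / (2 * real CARD('n)) * Q"
    using Q2 n0 by (simp add: field_simps)
  show ?thesis
    using rhs_dot[where E=E and x=x and K=K and w=w, OF Esym] dot_le[of x w] Q3 unfolding Q_def by linarith
qed




lemma deg_facts:
  fixes E :: "'n::finite \<Rightarrow> 'n \<Rightarrow> bool"
  assumes conn: "\<And>k l. E\<^sup>*\<^sup>* k l" and AB: "(A::'n) \<noteq> B"
  shows "1 \<le> min_degree E" "\<And>i. min_degree E \<le> card (neighbours E i)"
proof -
  show le: "min_degree E \<le> card (neighbours E i)" for i
    unfolding min_degree_def by (rule Min_le) auto
  have ne: "neighbours E i \<noteq> {}" for i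
  proof -
    obtain j where "j \<noteq> i" using AB by (metis (full_types))
    from conn[of i j] this obtain y where "E i y"
      by (metis converse_rtranclpE)
    then show ?thesis unfolding neighbours_def by auto
  qed
  have "min_degree E \<in> range (\<lambda>i. card (neighbours E i))"
    unfolding min_degree_def by (rule Min_in) auto
  then obtain i where "min_degree E = card (neighbours E i)" by auto
  moreover have "0 < card (neighbours E i)" using ne[of i] by (simp add: card_gt_0_iff)
  ultimately show "1 \<le> min_degree E" by simp
qed

lemma dist_ge2:
  fixes E :: "'n::finite \<Rightarrow> 'n \<Rightarrow> bool"
  assumes conn: "\<And>k l. E\<^sup>*\<^sup>* k l" and "k \<noteq> l" "\<not> E k l"
  shows "2 \<le> graph_dist E k l"
proof -
  obtain m0 where "(E ^^ m0) k l" using rtranclp_imp_relpowp[OF conn[of k l]] by blast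
  then have h: "(E ^^ graph_dist E k l) k l" unfolding graph_dist_def by (rule LeastI)
  show ?thesis
  proof (rule ccontr)
    assume "\<not> ?thesis"
    then have "graph_dist E k l = 0 \<or> graph_dist E k l = 1" by auto
    then show False using h assms by auto
  qed
qed

lemma card_nonnb:
  fixes E :: "'n::finite \<Rightarrow> 'n \<Rightarrow> bool"
  assumes irr: "\<And>a. \<not> E a a"
  shows "card {l. A \<noteq> l \<and> \<not> E A l} = CARD('n) - 1 - card (neighbours E A)"
proof -
  have U: "UNIV = neighbours E A \<union> insert A {l. A \<noteq> l \<and> \<not> E A l}"
    unfolding neighbours_def by auto
  have "CARD('n) = card (neighbours E A) + card (insert A {l. A \<noteq> l \<and> \<not> E A l})"
    by (subst U, rule card_Un_disjoint) (use irr in \<open>auto simp: neighbours_def\<close>)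
  also have "card (insert A {l. A \<noteq> l \<and> \<not> E A l}) = Suc (card {l. A \<noteq> l \<and> \<not> E A l})"
    by (rule card_insert_disjoint) auto
  finally show ?thesis by simp
qed

lemma counting:
  fixes E :: "'n::finite \<Rightarrow> 'n \<Rightarrow> bool"
  assumes conn: "\<And>k l. E\<^sup>*\<^sup>* k l" and irr: "\<And>a. \<not> E a a"
    and AB: "A \<noteq> B" "\<not> E A B"
    and dA: "card (neighbours E A) = d" and dB: "card (neighbours E B) = d" and d1: "1 \<le> d"
  shows "real CARD('n) * L_const E \<le> real d"
proof -
  define row where "row k = (\<Sum>l\<in>UNIV. if k \<noteq> l \<and> \<not> E k l then real (graph_dist E k l) else 0)" for k
  have row_ge: "2 * real (card {l. k \<noteq> l \<and> \<not> E k l}) \<le> row k" for k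
  proof -
    have "2 * real (card {l. k \<noteq> l \<and> \<not> E k l}) = (\<Sum>l\<in>UNIV. if k \<noteq> l \<and> \<not> E k l then 2 else 0)"
      by (simp add: sum.If_cases)
    also have "\<dots> \<le> row k" unfolding row_def
      using dist_ge2[OF conn] by (intro sum_mono) (auto simp del: of_nat_numeral)
    finally show ?thesis .
  qed
  have rnn: "0 \<le> row k" for k unfolding row_def by (auto intro!: sum_nonneg)
  have "row A + row B = (\<Sum>k\<in>{A,B}. row k)" using AB by simp
  also have "\<dots> \<le> (\<Sum>k\<in>UNIV. row k)" using rnn by (intro sum_mono2) auto
  finally have tot: "row A + row B \<le> 2 * nonedge_dist_sum E"
    unfolding nonedge_dist_sum_def row_def by simp
  define m where "m = CARD('n) - 1 - d"
  have cA: "card {l. A \<noteq> l \<and> \<not> E A l} = m" using card_nonnb[where E=E and A=A, OF irr] dA m_def by simp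
  have cB: "card {l. B \<noteq> l \<and> \<not> E B l} = m" using card_nonnb[where E=E and A=B, OF irr] dB m_def by simp
  have m1: "1 \<le> m"
  proof -
    have "B \<in> {l. A \<noteq> l \<and> \<not> E A l}" using AB by auto
    then have "card {l. A \<noteq> l \<and> \<not> E A l} \<noteq> 0" by (auto simp: card_eq_0_iff)
    then show ?thesis using cA by simp
  qed
  have N: "2 * real m \<le> nonedge_dist_sum E" using row_ge[of A] row_ge[of B] cA cB tot by linarith
  have n: "CARD('n) = d + 1 + m"
  proof -
    have "card (neighbours E A) < CARD('n)"
    proof (rule psubset_card_mono)
      show "neighbours E A \<subset> UNIV" using irr unfolding neighbours_def by auto
    qed simp
    then show ?thesis using m_def dA m1 by simp
  qed
  have "real CARD('n) \<le> real d * (1 + 2 * real m)"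
  proof -
    have "real m + 1 \<le> 2 * real m * real d" using m1 d1
      by (smt (verit) mult_le_cancel_left1 of_nat_1 of_nat_le_iff)
    then show ?thesis using n by (simp add: algebra_simps)
  qed
  also have "\<dots> \<le> real d * (1 + nonedge_dist_sum E)" using N by (intro mult_left_mono) auto
  finally show ?thesis unfolding L_const_def using nonedge_nonneg[of E]
    by (simp add: field_simps)
qed

lemma sq_subset: "(\<Sum>i\<in>T. (x $ i)\<^sup>2) \<le> (norm x)\<^sup>2" for x :: "real^'n::finite"
  unfolding norm_sq_vec by (intro sum_mono2) auto

lemma rhs_A:
  fixes E :: "'n::finite \<Rightarrow> 'n \<Rightarrow> bool" and x w :: "real^'n"
  shows "kuramoto_rhs E K w x $ A = w $ A - K / real CARD('n) * (\<Sum>k\<in>neighbours E A. sin (x $ A - x $ k))"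
proof -
  have "(\<Sum>k\<in>neighbours E A. sin (x $ k - x $ A)) = - (\<Sum>k\<in>neighbours E A. sin (x $ A - x $ k))"
    by (simp add: sum_negf[symmetric] sin_minus[symmetric])
  then show ?thesis unfolding kuramoto_rhs_def by simp
qed

lemma sum_split_nb:
  fixes f :: "'n \<Rightarrow> real"
  assumes "finite N"
  shows "(\<Sum>k\<in>N. f k) = (if B \<in> N then f B else 0) + (\<Sum>k\<in>N - {B}. f k)"
  using assms by (simp add: sum.remove)

lemma sum_ge_min_pairs:
  fixes t u :: "'n \<Rightarrow> real"
  assumes fin: "finite N1" "finite N2"
    and tnn: "\<And>k. k \<in> N1 \<Longrightarrow> 0 \<le> t k" and unn: "\<And>l. l \<in> N2 \<Longrightarrow> 0 \<le> u l"
    and c1: "d \<le> real (card N1)" and c2: "d \<le> real (card N2)" and d0: "0 \<le> d"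
    and pair: "\<And>k l. k \<in> N1 \<Longrightarrow> l \<in> N2 \<Longrightarrow> P \<le> t k + u l"
    and Pnn: "0 \<le> P"
  shows "d * P \<le> (\<Sum>k\<in>N1. t k) + (\<Sum>l\<in>N2. u l)"
    and "0 < d \<Longrightarrow> (\<And>k l. k \<in> N1 \<Longrightarrow> l \<in> N2 \<Longrightarrow> P < t k + u l) \<Longrightarrow> d * P < (\<Sum>k\<in>N1. t k) + (\<Sum>l\<in>N2. u l)"
proof -
  have sn: "0 \<le> (\<Sum>k\<in>N1. t k) + (\<Sum>l\<in>N2. u l)" using tnn unn by (intro add_nonneg_nonneg sum_nonneg) auto
  have main: "d * (t k0 + u l0) \<le> (\<Sum>k\<in>N1. t k) + (\<Sum>l\<in>N2. u l)"
    if k0: "k0 \<in> N1" "\<forall>k\<in>N1. t k0 \<le> t k" and l0: "l0 \<in> N2" "\<forall>l\<in>N2. u l0 \<le> u l" for k0 l0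
  proof -
    have "real (card N1) * t k0 \<le> (\<Sum>k\<in>N1. t k)" using k0 sum_mono[of N1 "\<lambda>_. t k0" t] by simp
    moreover have "d * t k0 \<le> real (card N1) * t k0" using c1 tnn[OF k0(1)] by (intro mult_right_mono) auto
    moreover have "real (card N2) * u l0 \<le> (\<Sum>l\<in>N2. u l)" using l0 sum_mono[of N2 "\<lambda>_. u l0" u] by simp
    moreover have "d * u l0 \<le> real (card N2) * u l0" using c2 unn[OF l0(1)] by (intro mult_right_mono) auto
    ultimately show ?thesis by (simp add: algebra_simps)
  qed
  have cases: "(N1 = {} \<or> N2 = {}) \<or> (\<exists>k0 l0. k0 \<in> N1 \<and> (\<forall>k\<in>N1. t k0 \<le> t k) \<and> l0 \<in> N2 \<and> (\<forall>l\<in>N2. u l0 \<le> u l))"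
  proof (cases "N1 = {} \<or> N2 = {}")
    case False
    then have ne: "N1 \<noteq> {}" "N2 \<noteq> {}" by auto
    obtain k0 where "k0 \<in> N1" "\<forall>k\<in>N1. t k0 \<le> t k"
      using Min_in[of "t ` N1"] Min_le[of "t ` N1"] fin ne by (metis (no_types, lifting) finite_imageI image_iff image_is_empty)
    moreover obtain l0 where "l0 \<in> N2" "\<forall>l\<in>N2. u l0 \<le> u l"
      using Min_in[of "u ` N2"] Min_le[of "u ` N2"] fin ne by (metis (no_types, lifting) finite_imageI image_iff image_is_empty)
    ultimately show ?thesis by blast
  qed simp
  show "d * P \<le> (\<Sum>k\<in>N1. t k) + (\<Sum>l\<in>N2. u l)"
  proof (cases "N1 = {} \<or> N2 = {}")
    case True
    then have "d = 0" using c1 c2 d0 by auto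
    then show ?thesis using sn by simp
  next
    case False
    then obtain k0 l0 where kl: "k0 \<in> N1" "\<forall>k\<in>N1. t k0 \<le> t k" "l0 \<in> N2" "\<forall>l\<in>N2. u l0 \<le> u l"
      using cases by blast
    have "d * P \<le> d * (t k0 + u l0)" using pair[OF kl(1) kl(3)] d0 by (intro mult_left_mono) auto
    then show ?thesis using main[OF kl(1,2) kl(3,4)] by linarith
  qed
  assume dpos: "0 < d" and strict: "\<And>k l. k \<in> N1 \<Longrightarrow> l \<in> N2 \<Longrightarrow> P < t k + u l"
  have "\<not> (N1 = {} \<or> N2 = {})" using c1 c2 dpos by auto
  then obtain k0 l0 where kl: "k0 \<in> N1" "\<forall>k\<in>N1. t k0 \<le> t k" "l0 \<in> N2" "\<forall>l\<in>N2. u l0 \<le> u l"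
    using cases by blast
  have "d * P < d * (t k0 + u l0)" using strict[OF kl(1) kl(3)] dpos by simp
  then show "d * P < (\<Sum>k\<in>N1. t k) + (\<Sum>l\<in>N2. u l)" using main[OF kl(1,2) kl(3,4)] by linarith
qed

lemma spread_core:
  fixes E :: "'n::finite \<Rightarrow> 'n \<Rightarrow> bool" and x w :: "real^'n"
  assumes Esym: "\<And>a b. E a b \<longleftrightarrow> E b a" and irr: "\<And>a. \<not> E a a" and conn: "\<And>k l. E\<^sup>*\<^sup>* k l"
    and D: "0 < D" "D \<le> pi/2"
    and AB: "x $ A - x $ B = D" and lo: "\<And>i. x $ B \<le> x $ i" and hi: "\<And>i. x $ i \<le> x $ A"
    and En: "(norm x)\<^sup>2 \<le> E0" and E0: "D\<^sup>2/2 \<le> E0" "E0 < 3/4 * D\<^sup>2"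
    and K: "0 < K"
    and Kw: "real CARD('n) * \<bar>w $ A - w $ B\<bar> / (2 * real (min_degree E) * sin (D/2 - sqrt (E0 - D\<^sup>2/2))) \<le> K"
    and Kstar: "norm w * D / (sqrt E0 * L_const E * sin D) \<le> K"
  shows "kuramoto_rhs E K w x $ A - kuramoto_rhs E K w x $ B < 0"
proof -
  have AneB: "A \<noteq> B" using AB D by auto
  define \<delta> where "\<delta> = min_degree E"
  have d1: "1 \<le> \<delta>" and dle: "\<And>i. \<delta> \<le> card (neighbours E i)"
    using deg_facts[OF conn AneB] unfolding \<delta>_def by auto
  define a where "a = x $ A"
  define b where "b = x $ B"
  define s where "s = (a + b) / 2"
  have a_eq: "a = s + D/2" and b_eq: "b = s - D/2" using AB unfolding a_def b_def s_def by (auto simp: field_simps)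
  have ab2: "a\<^sup>2 + b\<^sup>2 = D\<^sup>2/2 + 2 * s\<^sup>2" unfolding a_eq b_eq by (simp add: power2_eq_square algebra_simps)
  have nAB: "a\<^sup>2 + b\<^sup>2 \<le> (norm x)\<^sup>2" using sq_subset[where T="{A,B}" and x=x] AneB unfolding a_def b_def by simp
  define xE where "xE = sqrt ((norm x)\<^sup>2 - D\<^sup>2/2)"
  have nD: "D\<^sup>2/2 \<le> (norm x)\<^sup>2" using nAB ab2 zero_le_power2[of s] by linarith
  have xE0: "0 \<le> xE" unfolding xE_def using nD by simp
  have xE2: "xE\<^sup>2 = (norm x)\<^sup>2 - D\<^sup>2/2" unfolding xE_def using nD by simp
  define x0 where "x0 = sqrt (E0 - D\<^sup>2/2)"
  have xEx0: "xE \<le> x0" unfolding xE_def x0_def using En by simp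
  have x0D: "x0 < D/2"
  proof -
    have "E0 - D\<^sup>2/2 < (D/2)\<^sup>2" using E0 by (simp add: power2_eq_square)
    then have "sqrt (E0 - D\<^sup>2/2) < sqrt ((D/2)\<^sup>2)" by (rule real_sqrt_less_mono)
    then show ?thesis unfolding x0_def using D by simp
  qed
  have x00: "0 \<le> x0" unfolding x0_def using E0 by simp
  define \<theta> where "\<theta> = D/2 - x0"
  have th: "0 < \<theta>" "\<theta> \<le> D/2" unfolding \<theta>_def using x0D x00 by auto
  have pi4: "D/2 < pi/2" using D pi_gt3 by linarith
  have sth: "0 < sin \<theta>" using th D pi4 by (intro sin_gt_zero) auto
  have one: "2 * s\<^sup>2 + (x $ k)\<^sup>2 \<le> xE\<^sup>2" if "k \<noteq> A" "k \<noteq> B" for k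
    using sq_subset[where T="{A,B,k}" and x=x] that AneB ab2 xE2 unfolding a_def b_def by simp
  have two: "2 * s\<^sup>2 + (x $ k)\<^sup>2 + (x $ l)\<^sup>2 \<le> xE\<^sup>2" if "k \<noteq> A" "k \<noteq> B" "l \<noteq> A" "l \<noteq> B" "k \<noteq> l" for k l
    using sq_subset[where T="{A,B,k,l}" and x=x] that AneB ab2 xE2 unfolding a_def b_def by simp
  define t where "t k = sin (a - x $ k)" for k
  define u where "u l = sin (x $ l - b)" for l
  have tnn: "0 \<le> t k" for k unfolding t_def a_def
    using hi[of k] lo[of k] AB D pi_gt3 by (intro sin_ge_zero) auto
  have unn: "0 \<le> u l" for l unfolding u_def b_def
    using hi[of l] lo[of l] AB D pi_gt3 by (intro sin_ge_zero) auto
  define N1 where "N1 = neighbours E A - {B}"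
  define N2 where "N2 = neighbours E B - {A}"
  define P where "P = 2 * sin (D/2 - xE)"
  have xED: "xE < D/2" using xEx0 x0D by linarith
  have Pnn: "0 \<le> P" unfolding P_def using xED xE0 D pi4 by (intro mult_nonneg_nonneg sin_ge_zero) auto
  have pair: "P \<le> t k + u l" "0 < xE \<Longrightarrow> P < t k + u l" if "k \<in> N1" "l \<in> N2" for k l
  proof -
    have k: "k \<noteq> A" "k \<noteq> B" using that irr unfolding N1_def neighbours_def by auto
    have l: "l \<noteq> A" "l \<noteq> B" using that irr unfolding N2_def neighbours_def by auto
    have tk: "t k = sin (D/2 + s - x $ k)" unfolding t_def a_eq by (simp add: algebra_simps)
    have ul: "u l = sin (D/2 - s + x $ l)" unfolding u_def b_eq by (simp add: algebra_simps)
    show "P \<le> t k + u l" "0 < xE \<Longrightarrow> P < t k + u l"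
    proof -
      consider "k = l" | "k \<noteq> l" by blast
      then have "P \<le> t k + u l \<and> (0 < xE \<longrightarrow> P < t k + u l)"
      proof cases
        case 1
        then show ?thesis
          using pair_same[OF D xE0 xED one[OF k]] tk ul unfolding P_def by simp
      next
        case 2
        then show ?thesis
          using pair_diff[OF D xE0 xED two[OF k l 2]] tk ul unfolding P_def by simp
      qed
      then show "P \<le> t k + u l" "0 < xE \<Longrightarrow> P < t k + u l" by auto
    qed
  qed
  define e where "e = (if E A B then 1 else (0::real))"
  have cN1: "real \<delta> - e \<le> real (card N1)"
  proof -
    have "card N1 = card (neighbours E A) - (if B \<in> neighbours E A then 1 else 0)"
      unfolding N1_def by (simp add: card_Diff_singleton_if)
    moreover have "B \<in> neighbours E A \<longleftrightarrow> E A B" unfolding neighbours_def by simp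
    moreover have "B \<in> neighbours E A \<Longrightarrow> 1 \<le> card (neighbours E A)"
      by (metis card_0_eq empty_iff finite less_one not_le)
    ultimately show ?thesis using dle[of A] unfolding e_def by (auto simp: of_nat_diff)
  qed
  have cN2: "real \<delta> - e \<le> real (card N2)"
  proof -
    have "card N2 = card (neighbours E B) - (if A \<in> neighbours E B then 1 else 0)"
      unfolding N2_def by (simp add: card_Diff_singleton_if)
    moreover have "A \<in> neighbours E B \<longleftrightarrow> E A B" unfolding neighbours_def using Esym by simp
    moreover have "A \<in> neighbours E B \<Longrightarrow> 1 \<le> card (neighbours E B)"
      by (metis card_0_eq empty_iff finite less_one not_le)
    ultimately show ?thesis using dle[of B] unfolding e_def by (auto simp: of_nat_diff)
  qed
  have e01: "0 \<le> real \<delta> - e" using d1 unfolding e_def by auto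
  have tB: "t B = sin D" unfolding t_def a_def using AB by simp
  have uA: "u A = sin D" unfolding u_def b_def using AB by simp
  have SA: "(\<Sum>k\<in>neighbours E A. t k) = e * sin D + (\<Sum>k\<in>N1. t k)"
    using sum_split_nb[of "neighbours E A" t B] tB unfolding N1_def e_def neighbours_def by auto
  have SB: "(\<Sum>l\<in>neighbours E B. u l) = e * sin D + (\<Sum>l\<in>N2. u l)"
    using sum_split_nb[of "neighbours E B" u A] uA Esym unfolding N2_def e_def neighbours_def by auto
  define S where "S = (\<Sum>k\<in>neighbours E A. t k) + (\<Sum>l\<in>neighbours E B. u l)"
  have S_eq: "S = 2 * e * sin D + ((\<Sum>k\<in>N1. t k) + (\<Sum>l\<in>N2. u l))" unfolding S_def SA SB by simp
  have low: "(real \<delta> - e) * P \<le> (\<Sum>k\<in>N1. t k) + (\<Sum>l\<in>N2. u l)"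
    by (rule sum_ge_min_pairs(1)[OF _ _ _ _ cN1 cN2 e01 _ Pnn]) (use pair tnn unn in \<open>auto simp: N1_def N2_def\<close>)
  have lows: "(real \<delta> - e) * P < (\<Sum>k\<in>N1. t k) + (\<Sum>l\<in>N2. u l)" if "0 < xE" "0 < real \<delta> - e"
    by (rule sum_ge_min_pairs(2)[OF _ _ _ _ cN1 cN2 e01 _ Pnn that(2)]) (use pair tnn unn that in \<open>auto simp: N1_def N2_def\<close>)
  have Pth: "2 * sin \<theta> \<le> P" unfolding P_def \<theta>_def
    using xEx0 x0D xE0 pi4 by (auto intro!: sin_monotone_2pi_le)
  have diffeq: "kuramoto_rhs E K w x $ A - kuramoto_rhs E K w x $ B = (w $ A - w $ B) - K / real CARD('n) * S"
  proof -
    have "kuramoto_rhs E K w x $ B = w $ B + K / real CARD('n) * (\<Sum>l\<in>neighbours E B. u l)"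
      unfolding kuramoto_rhs_def u_def b_def by simp
    moreover have "kuramoto_rhs E K w x $ A = w $ A - K / real CARD('n) * (\<Sum>k\<in>neighbours E A. t k)"
      unfolding rhs_A t_def a_def by simp
    ultimately show ?thesis unfolding S_def by (simp add: algebra_simps)
  qed
  have npos: "0 < real CARD('n)" by simp
  have dpos: "0 < real \<delta>" using d1 by simp
  have Kw': "real CARD('n) * \<bar>w $ A - w $ B\<bar> \<le> K * (2 * real \<delta> * sin \<theta>)"
    using Kw sth dpos unfolding \<delta>_def[symmetric] \<theta>_def[symmetric] x0_def[symmetric]
    by (simp add: pos_divide_le_eq mult.commute)
  have fin: "(w $ A - w $ B) - K / real CARD('n) * S < 0" if "2 * real \<delta> * sin \<theta> < S"
  proof -
    have "K / real CARD('n) * (2 * real \<delta> * sin \<theta>) < K / real CARD('n) * S"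
      using that K npos by (intro mult_strict_left_mono) auto
    moreover have "\<bar>w $ A - w $ B\<bar> \<le> K / real CARD('n) * (2 * real \<delta> * sin \<theta>)"
      using Kw' npos by (simp add: field_simps)
    ultimately show ?thesis by linarith
  qed
  have sDth: "sin \<theta> < sin D" using th D pi4 by (subst sin_mono_less_eq) auto
  show ?thesis
  proof (cases "E A B")
    case True
    then have e1: "e = 1" unfolding e_def by simp
    have "(real \<delta> - 1) * (2 * sin \<theta>) \<le> (real \<delta> - 1) * P" using Pth d1 by (intro mult_left_mono) auto
    then have "2 * real \<delta> * sin \<theta> < S" using S_eq low e1 sDth by (simp add: algebra_simps)
    then show ?thesis using diffeq fin by simp
  next
    case False
    then have e0: "e = 0" unfolding e_def by simp
    show ?thesis
    proof (cases "0 < xE")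
      case True
      have "real \<delta> * (2 * sin \<theta>) \<le> real \<delta> * P" using Pth by (intro mult_left_mono) auto
      moreover have "real \<delta> * P < S" using lows[OF True] e0 dpos S_eq by simp
      ultimately have "2 * real \<delta> * sin \<theta> < S" by simp
      then show ?thesis using diffeq fin by simp
    next
      case False
      then have xE00: "xE = 0" using xE0 by simp
      show ?thesis
      proof (cases "0 < x0")
        case True
        have "sin \<theta> < sin (D/2)" unfolding \<theta>_def using True x0D pi4 by (subst sin_mono_less_eq) auto
        then have "real \<delta> * (2 * sin \<theta>) < real \<delta> * P" unfolding P_def xE00 using dpos by simp
        moreover have "real \<delta> * P \<le> S" using low e0 S_eq by simp
        ultimately have "2 * real \<delta> * sin \<theta> < S" by simp
        then show ?thesis using diffeq fin by simp
      next
        case False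
        then have x000: "x0 = 0" using x00 by simp
        have nx: "(norm x)\<^sup>2 = D\<^sup>2/2" using xE2 xE00 nAB ab2 by simp
        have E0eq: "E0 = D\<^sup>2/2" using x000 E0 unfolding x0_def by simp
        have s0: "s = 0" using nAB ab2 nx by simp
        have xk0: "x $ k = 0" if "k \<noteq> A" "k \<noteq> B" for k using one[OF that] s0 xE00 by simp
        have tk: "t k = sin (D/2)" if "k \<in> neighbours E A" for k
        proof -
          have "k \<noteq> A" "k \<noteq> B" using that irr \<open>\<not> E A B\<close> unfolding neighbours_def by auto
          then show ?thesis unfolding t_def a_eq s0 using xk0 by simp
        qed
        have ul: "u l = sin (D/2)" if "l \<in> neighbours E B" for l
        proof -
          have "l \<noteq> A" "l \<noteq> B" using that irr \<open>\<not> E A B\<close> Esym unfolding neighbours_def by auto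
          then show ?thesis unfolding u_def b_eq s0 using xk0 by simp
        qed
        have Seq: "S = (real (card (neighbours E A)) + real (card (neighbours E B))) * sin (D/2)"
          unfolding S_def using tk ul by (simp add: algebra_simps)
        have th2: "\<theta> = D/2" unfolding \<theta>_def x000 by simp
        have sD2: "0 < sin (D/2)" using sth th2 by simp
        show ?thesis
        proof (cases "card (neighbours E A) = \<delta> \<and> card (neighbours E B) = \<delta>")
          case False
          then have "2 * real \<delta> < real (card (neighbours E A)) + real (card (neighbours E B))"
            using dle[of A] dle[of B] by linarith
          then have "2 * real \<delta> * sin \<theta> < S" unfolding Seq th2 using sD2 by simp
          then show ?thesis using diffeq fin by simp
        next
          case True
          have S2: "S = 2 * real \<delta> * sin (D/2)" using Seq True by simp
          have nL: "real CARD('n) * L_const E \<le> real \<delta>"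
            using counting[OF conn irr AneB \<open>\<not> E A B\<close>] True d1 by blast
          have Lp: "0 < L_const E" by (rule L_pos)
          have sDp: "0 < sin D" using D pi_gt3 by (intro sin_gt_zero) auto
          have "0 < D * D" using D by simp
          then have sqE0: "0 < sqrt E0" using E0eq by (simp add: power2_eq_square)
          have ks: "norm w * D \<le> K * (sqrt E0 * L_const E * sin D)"
            using Kstar sqE0 Lp sDp by (simp add: pos_divide_le_eq mult.commute)
          have sq: "(norm w * D)\<^sup>2 \<le> (K * (sqrt E0 * L_const E * sin D))\<^sup>2"
            using ks D by (intro power_mono) auto
          have "(norm w * D)\<^sup>2 = (norm w)\<^sup>2 * D\<^sup>2" by (simp add: power_mult_distrib)
          moreover have "(K * (sqrt E0 * L_const E * sin D))\<^sup>2 = (K * L_const E * sin D)\<^sup>2 * (D\<^sup>2 / 2)"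
            using E0eq E0 by (simp add: power_mult_distrib)
          ultimately have "(norm w)\<^sup>2 * D\<^sup>2 \<le> (K * L_const E * sin D)\<^sup>2 * (D\<^sup>2 / 2)" using sq by simp
          then have nw: "2 * (norm w)\<^sup>2 \<le> (K * L_const E * sin D)\<^sup>2" using D by (simp add: field_simps)
          have "(w $ A - w $ B)\<^sup>2 \<le> 2 * ((w $ A)\<^sup>2 + (w $ B)\<^sup>2)"
          proof -
            have "0 \<le> (w $ A + w $ B)\<^sup>2" by simp
            then show ?thesis by (simp add: power2_eq_square algebra_simps)
          qed
          moreover have "(w $ A)\<^sup>2 + (w $ B)\<^sup>2 \<le> (norm w)\<^sup>2" using sq_subset[where T="{A,B}" and x=w] AneB by simp
          ultimately have "(w $ A - w $ B)\<^sup>2 \<le> 2 * (norm w)\<^sup>2" by (meson mult_left_mono order_trans zero_le_numeral)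
          then have "(w $ A - w $ B)\<^sup>2 \<le> (K * L_const E * sin D)\<^sup>2" using nw by (rule order_trans)
          then have dw: "\<bar>w $ A - w $ B\<bar> \<le> K * L_const E * sin D"
            using K Lp sDp by (metis abs_le_square_iff abs_of_pos mult_pos_pos)
          have cD: "cos (D/2) < 1"
          proof -
            have "(cos (D/2))\<^sup>2 < 1" using sin_cos_squared_add[of "D/2"] sD2 by (simp add: power2_eq_square) (smt (verit) mult_pos_pos)
            then show ?thesis by (smt (verit) one_le_power)
          qed
          have sd: "sin D = 2 * sin (D/2) * cos (D/2)" using sin_double[of "D/2"] by simp
          have "K * L_const E * sin D < K * L_const E * (2 * sin (D/2))"
            unfolding sd using K Lp sD2 cD by simp
          also have "\<dots> \<le> K / real CARD('n) * (2 * real \<delta> * sin (D/2))"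
          proof -
            have "L_const E \<le> real \<delta> / real CARD('n)" using nL npos by (simp add: field_simps)
            then have "K * L_const E * (2 * sin (D/2)) \<le> K * (real \<delta> / real CARD('n)) * (2 * sin (D/2))"
              using K sD2 by (intro mult_right_mono mult_left_mono) auto
            then show ?thesis by (simp add: field_simps)
          qed
          finally have "\<bar>w $ A - w $ B\<bar> < K / real CARD('n) * S" using dw S2 by simp
          then show ?thesis using diffeq by simp
        qed
      qed
    qed
  qed
qed




lemma nonincr_open:
  fixes f f' :: "real \<Rightarrow> real"
  assumes "a \<le> b" "continuous_on {a..b} f"
    and "\<And>t. a < t \<Longrightarrow> t < b \<Longrightarrow> (f has_real_derivative f' t) (at t)"
    and "\<And>t. a < t \<Longrightarrow> t < b \<Longrightarrow> f' t \<le> 0"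
  shows "f b \<le> f a"
proof -
  have "(\<lambda>t. - f t) a \<le> (\<lambda>t. - f t) b"
  proof (rule DERIV_nonneg_imp_increasing_open[OF assms(1)])
    fix t assume "a < t" "t < b"
    then show "\<exists>y. ((\<lambda>t. - f t) has_real_derivative y) (at t) \<and> 0 \<le> y"
      using assms(3,4) by (intro exI[of _ "- f' t"]) (auto intro!: derivative_eq_intros)
  qed (use assms(2) in \<open>auto intro!: continuous_intros\<close>)
  then show ?thesis by simp
qed

lemma stay_below:
  fixes f f' :: "real \<Rightarrow> real"
  assumes ab: "a \<le> b" and cont: "continuous_on {a..b} f"
    and der: "\<And>t. a < t \<Longrightarrow> t < b \<Longrightarrow> (f has_real_derivative f' t) (at t)"
    and fa: "f a \<le> c"
    and neg: "\<And>t. a < t \<Longrightarrow> t < b \<Longrightarrow> c < f t \<Longrightarrow> f' t \<le> 0"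
  shows "\<forall>t\<in>{a..b}. f t \<le> c"
proof (rule ccontr)
  assume "\<not> ?thesis"
  then obtain s where s: "a \<le> s" "s \<le> b" "c < f s" by auto
  define T where "T = {a..s} \<inter> f -` {..c}"
  have contS: "continuous_on {a..s} f" by (rule continuous_on_subset[OF cont]) (use s in auto)
  have clT: "closed T" unfolding T_def by (rule continuous_closed_preimage[OF contS]) auto
  have aT: "a \<in> T" unfolding T_def using fa s by auto
  have bdd: "bdd_above T" unfolding T_def by (rule bdd_aboveI[of _ s]) auto
  define r where "r = Sup T"
  have rT: "r \<in> T" unfolding r_def using closed_contains_Sup[OF _ bdd clT] aT by auto
  have rs: "a \<le> r" "r \<le> s" "f r \<le> c" using rT unfolding T_def by auto
  have rlt: "r < s" using rs s by (cases "r = s") auto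
  have above: "c < f t" if "r < t" "t \<le> s" for t
  proof (rule ccontr)
    assume "\<not> c < f t"
    then have "t \<in> T" unfolding T_def using that rs by auto
    then have "t \<le> r" unfolding r_def using bdd by (rule cSup_upper)
    then show False using that by simp
  qed
  have "f s \<le> f r"
  proof (rule nonincr_open[of r s f f'])
    show "continuous_on {r..s} f" by (rule continuous_on_subset[OF cont]) (use rs s in auto)
    fix t assume t: "r < t" "t < s"
    show "(f has_real_derivative f' t) (at t)" using der t rs s by auto
    show "f' t \<le> 0" using neg[of t] above[of t] t rs s by auto
  qed (use rlt in auto)
  then show False using rs s by simp
qed

lemma closed_limit_left:
  fixes g :: "real \<Rightarrow> real"
  assumes cont: "continuous_on {0..} g" and tau: "0 < \<tau>"
    and le: "\<And>s. 0 \<le> s \<Longrightarrow> s < \<tau> \<Longrightarrow> g s \<le> c"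
  shows "g \<tau> \<le> c"
proof -
  have "(g \<longlongrightarrow> g \<tau>) (at \<tau> within {0..<\<tau>})"
    using cont tau unfolding continuous_on_def
    by (meson atLeastLessThan_iff atLeast_iff less_eq_real_def tendsto_within_subset subsetI)
  moreover have "eventually (\<lambda>s. g s \<le> c) (at \<tau> within {0..<\<tau>})"
    using le by (auto simp: eventually_at_filter)
  moreover have "at \<tau> within {0..<\<tau>} \<noteq> bot"
    using tau by (subst at_within_eq_bot_iff) (auto simp: closure_atLeastLessThan)
  ultimately show ?thesis by (rule tendsto_upperbound)
qed

locale kur =
  fixes E :: "'n::finite \<Rightarrow> 'n \<Rightarrow> bool" and K :: real and w :: "real^'n" and \<phi> :: "real \<Rightarrow> real^'n"
  assumes graph: "undirected_graph E" and connd: "graph_connected E" and Kpos: "K > 0"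
    and wsum: "(\<Sum>i\<in>UNIV. w $ i) = 0"
    and ode: "\<forall>t\<ge>0. (\<phi> has_vector_derivative kuramoto_rhs E K w (\<phi> t)) (at t within {0..})"
begin

abbreviation "r x \<equiv> kuramoto_rhs E K w x"

lemma Esym: "E a b \<longleftrightarrow> E b a" using graph unfolding undirected_graph_def by blast
lemma irr: "\<not> E a a" using graph unfolding undirected_graph_def by blast
lemma conn: "E\<^sup>*\<^sup>* k l" using connd unfolding graph_connected_def by blast

lemma dcomp: "t \<ge> 0 \<Longrightarrow> ((\<lambda>t. \<phi> t $ i) has_real_derivative r (\<phi> t) $ i) (at t within {0..})"
  using bounded_linear.has_vector_derivative[OF bounded_linear_vec_nth[of i], of \<phi>] ode
  by (simp add: has_real_derivative_iff_has_vector_derivative)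

lemma dcomp_at: "t > 0 \<Longrightarrow> ((\<lambda>t. \<phi> t $ i) has_real_derivative r (\<phi> t) $ i) (at t)"
  using dcomp[of t i] at_within_interior[of t "{0..}"] by simp

lemma contphi: "continuous_on {0..} \<phi>"
  using ode by (intro continuous_on_vector_derivative) auto

lemma contp: "continuous_on {0..} (\<lambda>t. \<phi> t $ i)"
  using contphi by (intro continuous_intros)

lemma sum_const: "t \<ge> 0 \<Longrightarrow> (\<Sum>i\<in>UNIV. \<phi> t $ i) = (\<Sum>i\<in>UNIV. \<phi> 0 $ i)"
proof -
  have "\<exists>c. \<forall>x\<in>{0..}. (\<lambda>t. \<Sum>i\<in>UNIV. \<phi> t $ i) x = c"
  proof (rule has_derivative_zero_constant)
    fix x :: real assume "x \<in> {0..}"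
    then have "((\<lambda>t. \<Sum>i\<in>UNIV. \<phi> t $ i) has_real_derivative (\<Sum>i\<in>UNIV. r (\<phi> x) $ i)) (at x within {0..})"
      by (intro DERIV_sum dcomp) auto
    moreover have "(\<Sum>i\<in>UNIV. r (\<phi> x) $ i) = 0"
    proof -
      have "\<And>a b. E a b \<longleftrightarrow> E b a" by (rule Esym)
      from rhs_sum[where E=E and K=K and w=w and x="\<phi> x", OF this] wsum show ?thesis by simp
    qed
    ultimately show "((\<lambda>t. \<Sum>i\<in>UNIV. \<phi> t $ i) has_derivative (\<lambda>h. 0)) (at x within {0..})"
    proof -
      assume h: "((\<lambda>t. \<Sum>i\<in>UNIV. \<phi> t $ i) has_real_derivative (\<Sum>i\<in>UNIV. r (\<phi> x) $ i)) (at x within {0..})"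
         "(\<Sum>i\<in>UNIV. r (\<phi> x) $ i) = 0"
      have e: "(\<lambda>h::real. 0 * h) = (\<lambda>h. 0)" by auto
      show ?thesis using h unfolding has_field_derivative_def h(2) e by simp
    qed
  qed (rule convex_real_interval)
  then obtain c where "\<forall>x\<in>{0..}. (\<Sum>i\<in>UNIV. \<phi> x $ i) = c" by auto
  moreover assume "t \<ge> 0"
  ultimately show ?thesis by auto
qed

lemma En_deriv: "t > 0 \<Longrightarrow> ((\<lambda>t. (norm (\<phi> t))\<^sup>2) has_real_derivative 2 * (\<Sum>i\<in>UNIV. \<phi> t $ i * r (\<phi> t) $ i)) (at t)"
proof -
  assume t: "t > 0"
  have "((\<lambda>t. \<Sum>i\<in>UNIV. (\<phi> t $ i)\<^sup>2) has_real_derivative (\<Sum>i\<in>UNIV. 2 * (\<phi> t $ i) * r (\<phi> t) $ i)) (at t)"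
    by (intro DERIV_sum) (auto intro!: derivative_eq_intros dcomp_at[OF t])
  then show ?thesis unfolding norm_sq_vec by (simp add: sum_distrib_left algebra_simps)
qed

lemma contEn: "continuous_on {0..} (\<lambda>t. (norm (\<phi> t))\<^sup>2)"
  using contphi by (intro continuous_intros)

end




lemma spread_le_iff: "phase_spread x \<le> D \<longleftrightarrow> (\<forall>i j. x $ i - x $ j \<le> D)" for x :: "real^'n::finite"
proof -
  have "(MAX i. x $ i) \<in> range (\<lambda>i. x $ i)" by (rule Max_in) auto
  then obtain a where a: "(MAX i. x $ i) = x $ a" by (metis rangeE)
  have "(MIN i. x $ i) \<in> range (\<lambda>i. x $ i)" by (rule Min_in) auto
  then obtain b where b: "(MIN i. x $ i) = x $ b" by (metis rangeE)
  have "x $ i \<le> x $ a" for i using Max_ge[of "range (\<lambda>i. x $ i)" "x $ i"] a by auto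
  moreover have "x $ b \<le> x $ j" for j using Min_le[of "range (\<lambda>i. x $ i)" "x $ j"] b by auto
  ultimately show ?thesis unfolding phase_spread_def a b by (smt (verit))
qed

lemma spread_pos_ex: "0 < phase_spread x \<Longrightarrow> \<exists>i j. x $ i \<noteq> x $ j" for x :: "real^'n::finite"
proof (rule ccontr)
  assume "0 < phase_spread x" "\<not> (\<exists>i j. x $ i \<noteq> x $ j)"
  then have "\<forall>i j. x $ i - x $ j \<le> 0" by (metis diff_self order_refl)
  then have "phase_spread x \<le> 0" using spread_le_iff[of x 0] by blast
  then show False using \<open>0 < phase_spread x\<close> by simp
qed

lemma norm_eq_sqrt_sum: "norm x = sqrt (\<Sum>i\<in>UNIV. (x $ i)\<^sup>2)" for x :: "real^'n::finite"
  using norm_sq_vec[of x] by (metis norm_ge_zero real_sqrt_unique)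

lemma diff_sq_le: "i \<noteq> j \<Longrightarrow> (x $ i - x $ j)\<^sup>2 \<le> 2 * (norm x)\<^sup>2" for x :: "real^'n::finite"
proof -
  assume ij: "i \<noteq> j"
  have "(x $ i - x $ j)\<^sup>2 \<le> 2 * ((x $ i)\<^sup>2 + (x $ j)\<^sup>2)"
  proof -
    have "0 \<le> (x $ i + x $ j)\<^sup>2" by simp
    then show ?thesis by (simp add: power2_eq_square algebra_simps)
  qed
  moreover have "(x $ i)\<^sup>2 + (x $ j)\<^sup>2 \<le> (norm x)\<^sup>2" using sq_subset[where T="{i,j}" and x=x] ij by simp
  ultimately show ?thesis by (meson mult_left_mono order_trans zero_le_numeral)
qed

locale kur_inv = kur E K w \<phi> for E :: "'n::finite \<Rightarrow> 'n \<Rightarrow> bool" and K w \<phi> +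
  fixes D :: real
  assumes init_sum: "(\<Sum>i\<in>UNIV. \<phi> 0 $ i) = 0"
    and D0_pos: "0 < phase_spread (\<phi> 0)"
    and D0_le: "phase_spread (\<phi> 0) \<le> D"
    and D_le: "D \<le> pi / 2"
    and Kstar: "K \<ge> sqrt (\<Sum>i\<in>UNIV. (w $ i)^2) * D
                    / (sqrt (\<Sum>i\<in>UNIV. (\<phi> 0 $ i)^2) * L_const E * sin D)"
    and cond: "((\<Sum>i\<in>UNIV. (\<phi> 0 $ i)^2) < 3/4 * D^2 \<and>
               (\<forall>i j. K \<ge> real CARD('n) * \<bar>w $ i - w $ j\<bar>
                  / (2 * real (min_degree E)
                     * sin (D/2 - sqrt ((\<Sum>i\<in>UNIV. (\<phi> 0 $ i)^2) - D^2/2)))))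
             \<or> (\<Sum>i\<in>UNIV. (\<phi> 0 $ i)^2) < D^2/2"
begin

definition "E0 = (norm (\<phi> 0))\<^sup>2"

lemma E0_sum: "(\<Sum>i\<in>UNIV. (\<phi> 0 $ i)^2) = E0" unfolding E0_def norm_sq_vec ..

lemma Dpos: "0 < D" using D0_pos D0_le by linarith

lemma E0pos: "0 < E0"
proof -
  obtain i j where "\<phi> 0 $ i \<noteq> \<phi> 0 $ j" using spread_pos_ex[OF D0_pos] by blast
  then have "0 < (\<phi> 0 $ i - \<phi> 0 $ j)\<^sup>2" by simp
  then show ?thesis using diff_sq_le[of i j "\<phi> 0"] \<open>\<phi> 0 $ i \<noteq> \<phi> 0 $ j\<close> unfolding E0_def by fastforce
qed

lemma sinDpos: "0 < sin D" using Dpos D_le pi_gt3 by (intro sin_gt_zero) auto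

lemma Kstar0: "norm w * D / (sqrt E0 * L_const E * sin D) \<le> K"
  using Kstar unfolding E0_sum norm_eq_sqrt_sum[of w, symmetric] .

lemma Kstar': "norm w * D \<le> K * (sqrt E0 * L_const E * sin D)"
proof -
  have "norm w * D / (sqrt E0 * L_const E * sin D) \<le> K"
    using Kstar unfolding E0_sum norm_eq_sqrt_sum[of w, symmetric] .
  moreover have "0 < sqrt E0 * L_const E * sin D" using E0pos L_pos[of E] sinDpos by (intro mult_pos_pos) auto
  ultimately show ?thesis by (simp add: pos_divide_le_eq mult.commute)
qed

lemma sum0: "t \<ge> 0 \<Longrightarrow> (\<Sum>i\<in>UNIV. \<phi> t $ i) = 0"
  using sum_const init_sum by simp

lemma En_nonpos:
  assumes t: "t > 0" and pairs: "\<forall>i j. \<phi> t $ i - \<phi> t $ j \<le> D" and big: "E0 < (norm (\<phi> t))\<^sup>2"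
  shows "2 * (\<Sum>i\<in>UNIV. \<phi> t $ i * r (\<phi> t) $ i) \<le> 0"
proof -
  let ?x = "\<phi> t"
  have abs: "\<And>i k. \<bar>?x $ k - ?x $ i\<bar> \<le> D" using pairs by (metis abs_le_iff minus_diff_eq)
  have eb: "(\<Sum>i\<in>UNIV. ?x $ i * r ?x $ i) \<le> norm ?x * norm w - K * L_const E * (sin D / D) * (norm ?x)\<^sup>2"
    by (rule energy_bound[OF _ conn sum0 Dpos D_le abs Kpos]) (use Esym t in auto)
  have "sqrt E0 < norm ?x" using big E0pos by (metis norm_ge_zero real_sqrt_less_iff real_sqrt_unique)
  then have "K * L_const E * sin D * sqrt E0 \<le> K * L_const E * sin D * norm ?x"
    using Kpos L_pos[of E] sinDpos by (intro mult_left_mono mult_nonneg_nonneg) auto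
  with Kstar' have "norm w * D \<le> K * L_const E * sin D * norm ?x" by (simp add: algebra_simps)
  then have "norm w \<le> K * L_const E * (sin D / D) * norm ?x" using Dpos by (simp add: field_simps)
  then have "norm ?x * norm w \<le> norm ?x * (K * L_const E * (sin D / D) * norm ?x)"
    by (intro mult_left_mono) auto
  then show ?thesis using eb by (simp add: power2_eq_square algebra_simps)
qed

definition "ok t \<longleftrightarrow> (\<forall>i j. \<phi> t $ i - \<phi> t $ j \<le> D) \<and> (norm (\<phi> t))\<^sup>2 \<le> E0"

lemma ok0: "ok 0" unfolding ok_def E0_def using D0_le spread_le_iff by blast

lemma pair_event:
  assumes t: "t \<ge> 0" and okt: "ok t"
  shows "eventually (\<lambda>s. \<phi> s $ i - \<phi> s $ j \<le> D) (at_right t)"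
proof -
  define p where "p s = \<phi> s $ i - \<phi> s $ j" for s
  have cp: "continuous_on {0..} p" unfolding p_def by (rule continuous_on_diff[OF contp contp])
  have "(p \<longlongrightarrow> p t) (at t within {0..})" using cp t unfolding continuous_on_def by auto
  then have lim: "(p \<longlongrightarrow> p t) (at_right t)" by (rule tendsto_within_subset) (use t in auto)
  have ptD: "p t \<le> D" using okt unfolding ok_def p_def by auto
  show ?thesis
  proof (cases "p t < D")
    case True
    from order_tendstoD(2)[OF lim True] show ?thesis
      by (rule eventually_mono) (simp add: p_def)
  next
    case False
    then have eq: "\<phi> t $ i - \<phi> t $ j = D" using ptD unfolding p_def by simp
    then have ij: "i \<noteq> j" using Dpos by auto
    have "D\<^sup>2 \<le> 2 * (norm (\<phi> t))\<^sup>2" using diff_sq_le[OF ij, of "\<phi> t"] eq by simp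
    then have E0D: "D\<^sup>2 / 2 \<le> E0" using okt unfolding ok_def by simp
    then have c1: "E0 < 3/4 * D\<^sup>2" and
      Kw: "real CARD('n) * \<bar>w $ i - w $ j\<bar> / (2 * real (min_degree E) * sin (D/2 - sqrt (E0 - D\<^sup>2/2))) \<le> K"
      using cond unfolding E0_sum by auto
    have lo: "\<phi> t $ j \<le> \<phi> t $ k" for k using okt eq unfolding ok_def by (smt (verit))
    have hi: "\<phi> t $ k \<le> \<phi> t $ i" for k using okt eq unfolding ok_def by (smt (verit))
    have neg: "r (\<phi> t) $ i - r (\<phi> t) $ j < 0"
      by (rule spread_core[OF _ irr conn Dpos D_le eq lo hi _ E0D c1 Kpos Kw Kstar0])
        (use Esym okt in \<open>auto simp: ok_def\<close>)
    have "(p has_real_derivative r (\<phi> t) $ i - r (\<phi> t) $ j) (at t within {0..})"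
      unfolding p_def using dcomp[OF t, of i] dcomp[OF t, of j] by (rule DERIV_diff)
    from has_real_derivative_neg_dec_right[OF this neg] obtain d where
      d: "d > 0" "\<forall>h>0. t + h \<in> {0..} \<longrightarrow> h < d \<longrightarrow> p (t + h) < p t" by blast
    show ?thesis unfolding eventually_at_right_field
    proof (intro exI[of _ "t + d"] conjI allI impI)
      fix y assume y: "t < y" "y < t + d"
      have "t + (y - t) \<in> {0..}" "y - t > 0" "y - t < d" using y t by auto
      then have "p (t + (y - t)) < p t" using d(2) by blast
      then show "\<phi> y $ i - \<phi> y $ j \<le> D" using ptD unfolding p_def by simp
    qed (use d in auto)
  qed
qed

lemma ok_extend:
  assumes t: "t \<ge> 0" and okt: "ok t"
  shows "\<exists>b>t. \<forall>s\<in>{t..b}. ok s"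
proof -
  have "eventually (\<lambda>s. \<forall>i. \<forall>j. \<phi> s $ i - \<phi> s $ j \<le> D) (at_right t)"
    using pair_event[OF t okt] by (intro eventually_all_finite) auto
  then obtain b where b: "b > t" "\<forall>y>t. y < b \<longrightarrow> (\<forall>i j. \<phi> y $ i - \<phi> y $ j \<le> D)"
    unfolding eventually_at_right_field by blast
  define b' where "b' = (t + b) / 2"
  have b': "t < b'" "b' < b" using b unfolding b'_def by auto
  have pairs: "\<forall>i j. \<phi> s $ i - \<phi> s $ j \<le> D" if "s \<in> {t..b'}" for s
    using that b b' okt unfolding ok_def by (cases "s = t") auto
  have "\<forall>s\<in>{t..b'}. (norm (\<phi> s))\<^sup>2 \<le> E0"
  proof (rule stay_below[where f' = "\<lambda>s. 2 * (\<Sum>i\<in>UNIV. \<phi> s $ i * r (\<phi> s) $ i)"])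
    show "t \<le> b'" using b' by simp
    show "continuous_on {t..b'} (\<lambda>s. (norm (\<phi> s))\<^sup>2)"
      by (rule continuous_on_subset[OF contEn]) (use t in auto)
    show "(norm (\<phi> t))\<^sup>2 \<le> E0" using okt unfolding ok_def by simp
    fix s assume s: "t < s" "s < b'"
    show "((\<lambda>s. (norm (\<phi> s))\<^sup>2) has_real_derivative 2 * (\<Sum>i\<in>UNIV. \<phi> s $ i * r (\<phi> s) $ i)) (at s)"
      using En_deriv[of s] s t by simp
    assume "E0 < (norm (\<phi> s))\<^sup>2"
    then show "2 * (\<Sum>i\<in>UNIV. \<phi> s $ i * r (\<phi> s) $ i) \<le> 0"
      using En_nonpos[of s] s t pairs[of s] by auto
  qed
  then show ?thesis using pairs b' unfolding ok_def by (intro exI[of _ b']) auto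
qed

lemma ok_all: "t \<ge> 0 \<Longrightarrow> ok t"
proof (rule ccontr)
  assume t1: "t \<ge> 0" "\<not> ok t"
  define B where "B = {s. 0 \<le> s \<and> s \<le> t \<and> \<not> ok s}"
  define \<tau> where "\<tau> = Inf B"
  have Bne: "B \<noteq> {}" using t1 unfolding B_def by auto
  have bdd: "bdd_below B" unfolding B_def by (rule bdd_belowI[of _ 0]) auto
  have tau0: "0 \<le> \<tau>" unfolding \<tau>_def using Bne by (intro cInf_greatest) (auto simp: B_def)
  have taut: "\<tau> \<le> t" unfolding \<tau>_def using bdd t1 by (intro cInf_lower) (auto simp: B_def)
  have below: "ok s" if "0 \<le> s" "s < \<tau>" for s
  proof (rule ccontr)
    assume "\<not> ok s"
    then have "s \<in> B" using that taut unfolding B_def by auto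
    then have "\<tau> \<le> s" unfolding \<tau>_def using bdd by (rule cInf_lower)
    then show False using that by simp
  qed
  have okt: "ok \<tau>"
  proof (cases "\<tau> = 0")
    case True then show ?thesis using ok0 by simp
  next
    case False
    then have tp: "0 < \<tau>" using tau0 by simp
    have "\<phi> \<tau> $ i - \<phi> \<tau> $ j \<le> D" for i j
    proof (rule closed_limit_left[of "\<lambda>s. \<phi> s $ i - \<phi> s $ j", OF _ tp])
      show "continuous_on {0..} (\<lambda>s. \<phi> s $ i - \<phi> s $ j)" by (rule continuous_on_diff[OF contp contp])
      fix s assume "0 \<le> s" "s < \<tau>"
      then show "\<phi> s $ i - \<phi> s $ j \<le> D" using below unfolding ok_def by blast
    qed
    moreover have "(norm (\<phi> \<tau>))\<^sup>2 \<le> E0"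
      using closed_limit_left[of "\<lambda>s. (norm (\<phi> s))\<^sup>2", OF contEn tp] below unfolding ok_def by auto
    ultimately show ?thesis unfolding ok_def by auto
  qed
  obtain b where b: "b > \<tau>" "\<forall>s\<in>{\<tau>..b}. ok s" using ok_extend[OF tau0 okt] by blast
  have "b \<le> \<tau>" unfolding \<tau>_def
  proof (rule cInf_greatest[OF Bne])
    fix s assume s: "s \<in> B"
    then have "\<tau> \<le> s" unfolding \<tau>_def using bdd by (rule cInf_lower)
    moreover have "\<not> ok s" using s unfolding B_def by auto
    ultimately show "b \<le> s" using b by (meson atLeastAtMost_iff linorder_le_cases)
  qed
  then show False using b by simp
qed

end




definition edges :: "('n::finite \<Rightarrow> 'n \<Rightarrow> bool) \<Rightarrow> ('n \<times> 'n) set" where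
  "edges E = {p. E (fst p) (snd p)}"

definition potV :: "('n::finite \<Rightarrow> 'n \<Rightarrow> bool) \<Rightarrow> real \<Rightarrow> real^'n \<Rightarrow> real^'n \<Rightarrow> real" where
  "potV E K w x = - (\<Sum>i\<in>UNIV. w $ i * x $ i)
     - K / (2 * real CARD('n)) * (\<Sum>p\<in>edges E. cos (x $ snd p - x $ fst p))"

lemma pot_alg:
  fixes E :: "'n::finite \<Rightarrow> 'n \<Rightarrow> bool" and x y w :: "real^'n"
  assumes Esym: "\<And>a b. E a b \<longleftrightarrow> E b a"
  shows "- (\<Sum>i\<in>UNIV. w $ i * y $ i)
     + K / (2 * real CARD('n)) * (\<Sum>p\<in>edges E. sin (x $ snd p - x $ fst p) * (y $ snd p - y $ fst p))
     = - (\<Sum>i\<in>UNIV. y $ i * kuramoto_rhs E K w x $ i)"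
proof -
  define S where "S = (\<Sum>i\<in>UNIV. \<Sum>k\<in>UNIV. if E i k then sin (x $ k - x $ i) * y $ i else 0)"
  have e: "(\<Sum>p\<in>edges E. sin (x $ snd p - x $ fst p) * (y $ snd p - y $ fst p))
      = (\<Sum>i\<in>UNIV. \<Sum>k\<in>UNIV. if E i k then sin (x $ k - x $ i) * (y $ k - y $ i) else 0)"
    unfolding edges_def using sum_edges_conv[of E "\<lambda>i k. sin (x $ k - x $ i) * (y $ k - y $ i)"] by simp
  have z: "(\<Sum>i\<in>UNIV. \<Sum>k\<in>UNIV. if E i k then sin (x $ k - x $ i) * (y $ k + y $ i) else 0) = 0"
  proof (rule antisym_sum_zero[OF Esym])
    fix a b
    have "sin (x $ b - x $ a) = - sin (x $ a - x $ b)" using sin_minus[of "x $ a - x $ b"] by simp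
    then show "sin (x $ b - x $ a) * (y $ b + y $ a) = - (sin (x $ a - x $ b) * (y $ a + y $ b))"
      by (simp add: algebra_simps)
  qed
  have split1: "(\<Sum>i\<in>UNIV. \<Sum>k\<in>UNIV. if E i k then sin (x $ k - x $ i) * (y $ k + y $ i) else 0)
     = (\<Sum>i\<in>UNIV. \<Sum>k\<in>UNIV. if E i k then sin (x $ k - x $ i) * (y $ k - y $ i) else 0) + 2 * S"
  proof -
    have "(\<Sum>i\<in>UNIV. \<Sum>k\<in>UNIV. if E i k then sin (x $ k - x $ i) * (y $ k + y $ i) else 0)
      = (\<Sum>i\<in>UNIV. \<Sum>k\<in>UNIV. (if E i k then sin (x $ k - x $ i) * (y $ k - y $ i) else 0)
            + 2 * (if E i k then sin (x $ k - x $ i) * y $ i else 0))"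
      by (intro sum.cong refl) (auto simp: algebra_simps)
    then show ?thesis unfolding S_def by (simp add: sum.distrib sum_distrib_left)
  qed
  have S2: "(\<Sum>p\<in>edges E. sin (x $ snd p - x $ fst p) * (y $ snd p - y $ fst p)) = - 2 * S"
    using e z split1 by simp
  have Sr: "S = (\<Sum>i\<in>UNIV. y $ i * (\<Sum>k\<in>neighbours E i. sin (x $ k - x $ i)))"
    unfolding S_def nb_sum
    by (intro sum.cong refl) (simp add: sum_distrib_left if_distrib mult.commute cong: if_cong)
  have "(\<Sum>i\<in>UNIV. y $ i * kuramoto_rhs E K w x $ i)
      = (\<Sum>i\<in>UNIV. w $ i * y $ i) + K / real CARD('n) * S"
    unfolding Sr kuramoto_rhs_def by (simp add: algebra_simps sum.distrib sum_distrib_left)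
  then show ?thesis using S2 by simp
qed

context kur_inv
begin

lemma bounded: "t \<ge> 0 \<Longrightarrow> norm (\<phi> t) \<le> sqrt E0"
  using ok_all[of t] unfolding ok_def by (metis norm_ge_zero real_le_rsqrt)

definition "R = norm w + K"

lemma rhs_bound: "\<bar>r x $ i\<bar> \<le> R"
proof -
  have "\<bar>\<Sum>k\<in>neighbours E i. sin (x $ k - x $ i)\<bar> \<le> (\<Sum>k\<in>neighbours E i. 1)"
    by (rule order_trans[OF sum_abs]) (intro sum_mono, simp)
  also have "\<dots> = real (card (neighbours E i))" by simp
  also have "\<dots> \<le> real CARD('n)" by (simp add: card_mono)
  finally have s: "\<bar>\<Sum>k\<in>neighbours E i. sin (x $ k - x $ i)\<bar> \<le> real CARD('n)" .
  have "\<bar>K / real CARD('n) * (\<Sum>k\<in>neighbours E i. sin (x $ k - x $ i))\<bar>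
      = K / real CARD('n) * \<bar>\<Sum>k\<in>neighbours E i. sin (x $ k - x $ i)\<bar>" using Kpos by (simp add: abs_mult)
  also have "\<dots> \<le> K / real CARD('n) * real CARD('n)"
    using s Kpos by (intro mult_left_mono) auto
  also have "\<dots> = K" by simp
  finally have "\<bar>K / real CARD('n) * (\<Sum>k\<in>neighbours E i. sin (x $ k - x $ i))\<bar> \<le> K" .
  then have "\<bar>K / real CARD('n) * (\<Sum>k\<in>neighbours E i. sin (x $ k - x $ i))\<bar> \<le> K" .
  moreover have "\<bar>w $ i\<bar> \<le> norm w" by (rule component_le_norm_cart)
  ultimately have "\<bar>w $ i\<bar> + \<bar>K / real CARD('n) * (\<Sum>k\<in>neighbours E i. sin (x $ k - x $ i))\<bar> \<le> R"
    unfolding R_def by linarith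
  moreover have "r x $ i = w $ i + K / real CARD('n) * (\<Sum>k\<in>neighbours E i. sin (x $ k - x $ i))"
    unfolding kuramoto_rhs_def by simp
  ultimately show ?thesis using abs_triangle_ineq[of "w $ i" "K / real CARD('n) * (\<Sum>k\<in>neighbours E i. sin (x $ k - x $ i))"]
    by linarith
qed

lemma comp_lip: "0 \<le> s \<Longrightarrow> s \<le> t \<Longrightarrow> \<bar>\<phi> t $ i - \<phi> s $ i\<bar> \<le> R * (t - s)"
proof -
  assume st: "0 \<le> s" "s \<le> t"
  have c: "continuous_on {s..t} (\<lambda>u. \<phi> u $ i)" by (rule continuous_on_subset[OF contp]) (use st in auto)
  have "(\<lambda>u. \<phi> u $ i - R * u) t \<le> (\<lambda>u. \<phi> u $ i - R * u) s"
  proof (rule nonincr_open[OF st(2)])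
    show "continuous_on {s..t} (\<lambda>u. \<phi> u $ i - R * u)" by (rule continuous_on_diff[OF c]) (intro continuous_intros)
    fix u assume u: "s < u" "u < t"
    show "((\<lambda>u. \<phi> u $ i - R * u) has_real_derivative r (\<phi> u) $ i - R) (at u)"
      using dcomp_at[of u i] u st by (auto intro!: derivative_eq_intros)
    show "r (\<phi> u) $ i - R \<le> 0" using rhs_bound[of "\<phi> u" i] by simp
  qed
  moreover have "(\<lambda>u. - \<phi> u $ i - R * u) t \<le> (\<lambda>u. - \<phi> u $ i - R * u) s"
  proof (rule nonincr_open[OF st(2)])
    show "continuous_on {s..t} (\<lambda>u. - \<phi> u $ i - R * u)" by (rule continuous_on_diff[OF continuous_on_minus[OF c]]) (intro continuous_intros)
    fix u assume u: "s < u" "u < t"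
    show "((\<lambda>u. - \<phi> u $ i - R * u) has_real_derivative - r (\<phi> u) $ i - R) (at u)"
      using dcomp_at[of u i] u st by (auto intro!: derivative_eq_intros)
    show "- r (\<phi> u) $ i - R \<le> 0" using rhs_bound[of "\<phi> u" i] by simp
  qed
  ultimately show ?thesis by (simp add: algebra_simps abs_le_iff)
qed

lemma phi_lip: "0 \<le> s \<Longrightarrow> s \<le> t \<Longrightarrow> dist (\<phi> t) (\<phi> s) \<le> real CARD('n) * R * (t - s)"
proof -
  assume st: "0 \<le> s" "s \<le> t"
  have "dist (\<phi> t) (\<phi> s) \<le> (\<Sum>i\<in>UNIV. \<bar>(\<phi> t - \<phi> s) $ i\<bar>)" unfolding dist_norm by (rule norm_le_l1_cart)
  also have "\<dots> \<le> of_nat (card (UNIV::'n set)) * (R * (t - s))"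
    by (rule sum_bounded_above) (use comp_lip[OF st] in simp)
  also have "\<dots> = real CARD('n) * R * (t - s)" by simp
  finally show ?thesis .
qed

definition "F t = potV E K w (\<phi> t)"

lemma F_deriv: "t > 0 \<Longrightarrow> (F has_real_derivative - (norm (r (\<phi> t)))\<^sup>2) (at t)"
proof -
  assume t: "t > 0"
  have d1: "((\<lambda>s. \<Sum>i\<in>UNIV. w $ i * \<phi> s $ i) has_real_derivative (\<Sum>i\<in>UNIV. w $ i * r (\<phi> t) $ i)) (at t)"
    by (intro DERIV_sum DERIV_cmult dcomp_at[OF t])
  have d2: "((\<lambda>s. \<Sum>p\<in>edges E. cos (\<phi> s $ snd p - \<phi> s $ fst p)) has_real_derivative
      (\<Sum>p\<in>edges E. - sin (\<phi> t $ snd p - \<phi> t $ fst p) * (r (\<phi> t) $ snd p - r (\<phi> t) $ fst p))) (at t)"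
  proof (intro DERIV_sum)
    fix p
    show "((\<lambda>s. cos (\<phi> s $ snd p - \<phi> s $ fst p)) has_real_derivative
      - sin (\<phi> t $ snd p - \<phi> t $ fst p) * (r (\<phi> t) $ snd p - r (\<phi> t) $ fst p)) (at t)"
      by (rule DERIV_chain2[OF DERIV_cos DERIV_diff[OF dcomp_at[OF t] dcomp_at[OF t]]])
  qed
  have "(F has_real_derivative
      - (\<Sum>i\<in>UNIV. w $ i * r (\<phi> t) $ i)
      - K / (2 * real CARD('n)) * (\<Sum>p\<in>edges E. - sin (\<phi> t $ snd p - \<phi> t $ fst p) * (r (\<phi> t) $ snd p - r (\<phi> t) $ fst p))) (at t)"
    unfolding F_def potV_def by (intro DERIV_diff DERIV_minus DERIV_cmult d1 d2)
  moreover have "- (\<Sum>i\<in>UNIV. w $ i * r (\<phi> t) $ i)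
      - K / (2 * real CARD('n)) * (\<Sum>p\<in>edges E. - sin (\<phi> t $ snd p - \<phi> t $ fst p) * (r (\<phi> t) $ snd p - r (\<phi> t) $ fst p))
      = - (norm (r (\<phi> t)))\<^sup>2"
  proof -
    have "\<And>a b. E a b \<longleftrightarrow> E b a" by (rule Esym)
    note pa = pot_alg[where E=E and K=K and w=w and x="\<phi> t" and y="r (\<phi> t)", OF this]
    have nr: "(norm (r (\<phi> t)))\<^sup>2 = (\<Sum>i\<in>UNIV. r (\<phi> t) $ i * r (\<phi> t) $ i)"
      unfolding norm_sq_vec by (simp add: power2_eq_square)
    show ?thesis unfolding nr using pa by (simp add: sum_negf)
  qed
  ultimately show ?thesis by simp
qed

lemma contV: "continuous_on UNIV (potV E K w)"
  unfolding potV_def by (intro continuous_intros)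

lemma contF: "continuous_on {0..} F"
  unfolding F_def by (rule continuous_on_compose2[OF contV contphi]) auto

lemma F_drop:
  assumes t: "0 \<le> t" and h: "0 \<le> h" and G: "\<And>s. t < s \<Longrightarrow> s < t + h \<Longrightarrow> \<mu> \<le> (norm (r (\<phi> s)))\<^sup>2"
  shows "F (t + h) \<le> F t - \<mu> * h"
proof -
  have "(\<lambda>s. F s + \<mu> * s) (t + h) \<le> (\<lambda>s. F s + \<mu> * s) t"
  proof (rule nonincr_open[where f="\<lambda>s. F s + \<mu> * s" and f'="\<lambda>s. - (norm (r (\<phi> s)))\<^sup>2 + \<mu>"])
    show "t \<le> t + h" using h by simp
    show "continuous_on {t..t + h} (\<lambda>s. F s + \<mu> * s)"
      using continuous_on_subset[OF contF, of "{t..t+h}"] t by (auto intro!: continuous_intros)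
    fix s assume s: "t < s" "s < t + h"
    show "((\<lambda>s. F s + \<mu> * s) has_real_derivative - (norm (r (\<phi> s)))\<^sup>2 + \<mu>) (at s)"
      using F_deriv[of s] s t by (auto intro!: derivative_eq_intros)
    show "- (norm (r (\<phi> s)))\<^sup>2 + \<mu> \<le> 0" using G[OF s] by simp
  qed
  then show ?thesis by (simp add: algebra_simps)
qed

lemma F_lower: "t \<ge> 0 \<Longrightarrow> - norm w * sqrt E0 - K / (2 * real CARD('n)) * real (card (edges E)) \<le> F t"
proof -
  assume t: "t \<ge> 0"
  have a: "(\<Sum>i\<in>UNIV. w $ i * \<phi> t $ i) \<le> norm w * sqrt E0"
  proof -
    have "(\<Sum>i\<in>UNIV. w $ i * \<phi> t $ i) \<le> norm w * norm (\<phi> t)" by (rule dot_le)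
    also have "\<dots> \<le> norm w * sqrt E0" using bounded[OF t] by (intro mult_left_mono) auto
    finally show ?thesis .
  qed
  have b: "(\<Sum>p\<in>edges E. cos (\<phi> t $ snd p - \<phi> t $ fst p)) \<le> real (card (edges E))"
    using sum_mono[of "edges E" "\<lambda>p. cos (\<phi> t $ snd p - \<phi> t $ fst p)" "\<lambda>_. 1"] by simp
  have "K / (2 * real CARD('n)) * (\<Sum>p\<in>edges E. cos (\<phi> t $ snd p - \<phi> t $ fst p))
      \<le> K / (2 * real CARD('n)) * real (card (edges E))"
    using b Kpos by (intro mult_left_mono) auto
  then show ?thesis unfolding F_def potV_def using a by linarith
qed

end




lemma rcont: "continuous_on UNIV (kuramoto_rhs E K w)"
  unfolding kuramoto_rhs_def by (intro continuous_intros)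

context kur_inv
begin

lemma pos_inf:
  assumes e: "0 < \<epsilon>"
  shows "\<exists>\<mu>>0. \<forall>x. norm x \<le> \<rho> \<longrightarrow> \<epsilon>/2 \<le> infdist x {x. r x = 0} \<longrightarrow> \<mu> \<le> (norm (r x))\<^sup>2"
proof -
  define Z where "Z = {x. r x = 0}"
  define C where "C = cball 0 \<rho> \<inter> {x. \<epsilon>/2 \<le> infdist x Z}"
  have clo: "closed {x. \<epsilon>/2 \<le> infdist x Z}"
    by (rule closed_Collect_le) (intro continuous_intros)+
  have comp: "compact C" unfolding C_def using clo by (intro compact_Int_closed compact_cball)
  show ?thesis
  proof (cases "C = {}")
    case True
    then show ?thesis unfolding C_def Z_def by (intro exI[of _ 1]) (auto simp: mem_cball_0)
  next
    case False
    have cr: "continuous_on C (\<lambda>x. (norm (r x))\<^sup>2)"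
      using continuous_on_subset[OF rcont[of E K w], of C] by (intro continuous_intros) auto
    obtain x0 where x0: "x0 \<in> C" "\<forall>y\<in>C. (norm (r x0))\<^sup>2 \<le> (norm (r y))\<^sup>2"
      using continuous_attains_inf[OF comp False cr] by blast
    have "r x0 \<noteq> 0"
    proof
      assume "r x0 = 0"
      then have "x0 \<in> Z" unfolding Z_def by simp
      then have "infdist x0 Z = 0" by simp
      then show False using x0(1) e unfolding C_def by auto
    qed
    then have "0 < (norm (r x0))\<^sup>2" by simp
    then show ?thesis using x0 unfolding C_def Z_def by (intro exI[of _ "(norm (r x0))\<^sup>2"]) (auto simp: mem_cball_0)
  qed
qed

lemma Rpos: "0 < R" unfolding R_def using Kpos norm_ge_zero[of w] by linarith

lemma F_mono: "0 \<le> a \<Longrightarrow> a \<le> b \<Longrightarrow> F b \<le> F a"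
  using F_drop[of a "b - a" 0] by simp

lemma conv_main:
  assumes e: "0 < \<epsilon>"
  shows "\<exists>T. \<forall>t\<ge>T. infdist (\<phi> t) {x. r x = 0} < \<epsilon>"
proof (rule ccontr)
  define Z where "Z = {x. r x = 0}"
  assume "\<not> ?thesis"
  then have H: "\<forall>T. \<exists>t\<ge>T. \<epsilon> \<le> infdist (\<phi> t) Z" unfolding Z_def by (auto simp: not_less)
  obtain \<mu> where mu: "\<mu> > 0" "\<forall>x. norm x \<le> sqrt E0 \<longrightarrow> \<epsilon>/2 \<le> infdist x Z \<longrightarrow> \<mu> \<le> (norm (r x))\<^sup>2"
    using pos_inf[OF e, of "sqrt E0"] unfolding Z_def by blast
  define h where "h = \<epsilon> / (2 * (real CARD('n) * R + 1))"
  have nR: "0 \<le> real CARD('n) * R" using Rpos by simp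
  have hpos: "0 < h" unfolding h_def using e nR by simp
  have hR: "real CARD('n) * R * h \<le> \<epsilon>/2"
  proof -
    have "real CARD('n) * R * h = \<epsilon> / 2 * (real CARD('n) * R / (real CARD('n) * R + 1))"
      unfolding h_def by (simp add: field_simps)
    also have "\<dots> \<le> \<epsilon> / 2 * 1" using nR e by (intro mult_left_mono) auto
    finally show ?thesis by simp
  qed
  have drop: "F (t + h) \<le> F t - \<mu> * h" if t: "0 \<le> t" "\<epsilon> \<le> infdist (\<phi> t) Z" for t
  proof (rule F_drop[OF t(1)])
    show "0 \<le> h" using hpos by simp
    fix s assume s: "t < s" "s < t + h"
    have "dist (\<phi> s) (\<phi> t) \<le> real CARD('n) * R * (s - t)" using phi_lip[of t s] s t by simp
    also have "\<dots> \<le> real CARD('n) * R * h" using s nR by (intro mult_left_mono) auto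
    finally have "dist (\<phi> s) (\<phi> t) \<le> \<epsilon>/2" using hR by simp
    moreover have "infdist (\<phi> t) Z \<le> infdist (\<phi> s) Z + dist (\<phi> t) (\<phi> s)" by (rule infdist_triangle)
    ultimately have "\<epsilon>/2 \<le> infdist (\<phi> s) Z" using t by (simp add: dist_commute)
    moreover have "norm (\<phi> s) \<le> sqrt E0" using bounded[of s] s t by simp
    ultimately show "\<mu> \<le> (norm (r (\<phi> s)))\<^sup>2" using mu by blast
  qed
  have ind: "\<exists>t\<ge>0. F t \<le> F 0 - real k * (\<mu> * h)" for k
  proof (induction k)
    case 0 then show ?case by (intro exI[of _ 0]) simp
  next
    case (Suc k)
    then obtain t where t: "t \<ge> 0" "F t \<le> F 0 - real k * (\<mu> * h)" by blast
    obtain t' where t': "t' \<ge> t" "\<epsilon> \<le> infdist (\<phi> t') Z" using H by blast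
    have "F (t' + h) \<le> F t' - \<mu> * h" using drop[of t'] t t' by simp
    also have "F t' \<le> F t" using F_mono[of t t'] t t' by simp
    finally have "F (t' + h) \<le> F 0 - real (Suc k) * (\<mu> * h)" using t by (simp add: algebra_simps)
    then show ?case using t t' hpos by (intro exI[of _ "t' + h"]) auto
  qed
  define Lb where "Lb = - norm w * sqrt E0 - K / (2 * real CARD('n)) * real (card (edges E))"
  have mh: "0 < \<mu> * h" using mu hpos by simp
  obtain k where k: "(F 0 - Lb) / (\<mu> * h) < real k" using reals_Archimedean2 by blast
  then have "F 0 - Lb < real k * (\<mu> * h)" using mh by (simp add: pos_divide_less_eq)
  moreover obtain t where "t \<ge> 0" "F t \<le> F 0 - real k * (\<mu> * h)" using ind by blast
  moreover have "Lb \<le> F t" using F_lower[OF \<open>t \<ge> 0\<close>] unfolding Lb_def by simp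
  ultimately show False by linarith
qed

lemma conv: "((\<lambda>t. infdist (\<phi> t) {x. r x = 0}) \<longlongrightarrow> 0) at_top"
proof (rule tendstoI)
  fix e :: real assume e: "0 < e"
  obtain T where T: "\<forall>t\<ge>T. infdist (\<phi> t) {x. r x = 0} < e" using conv_main[OF e] by blast
  show "eventually (\<lambda>t. dist (infdist (\<phi> t) {x. r x = 0}) 0 < e) at_top"
    unfolding eventually_at_top_linorder using T by (auto simp: infdist_nonneg)
qed

lemma spread_all: "\<forall>t\<ge>0. phase_spread (\<phi> t) \<le> D"
  using ok_all spread_le_iff unfolding ok_def by blast

end

theorem theorem1:
  fixes E :: "'n::finite \<Rightarrow> 'n \<Rightarrow> bool"
    and K D :: real
    and w :: "real^'n"
    and \<phi> :: "real \<Rightarrow> real^'n"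
  assumes graph: "undirected_graph E"
    and conn: "graph_connected E"
    and Kpos: "K > 0"
    and wsum: "(\<Sum>i\<in>UNIV. w $ i) = 0"
    and ode: "\<forall>t\<ge>0. (\<phi> has_vector_derivative kuramoto_rhs E K w (\<phi> t)) (at t within {0..})"
    and init_sum: "(\<Sum>i\<in>UNIV. \<phi> 0 $ i) = 0"
    and D0_pos: "0 < phase_spread (\<phi> 0)"
    and D0_le: "phase_spread (\<phi> 0) \<le> D"
    and D_le: "D \<le> pi / 2"
    and Kstar: "K \<ge> sqrt (\<Sum>i\<in>UNIV. (w $ i)^2) * D
                    / (sqrt (\<Sum>i\<in>UNIV. (\<phi> 0 $ i)^2) * L_const E * sin D)"
    and cond: "((\<Sum>i\<in>UNIV. (\<phi> 0 $ i)^2) < 3/4 * D^2 \<and>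
               (\<forall>i j. K \<ge> real CARD('n) * \<bar>w $ i - w $ j\<bar>
                  / (2 * real (min_degree E)
                     * sin (D/2 - sqrt ((\<Sum>i\<in>UNIV. (\<phi> 0 $ i)^2) - D^2/2)))))
             \<or> (\<Sum>i\<in>UNIV. (\<phi> 0 $ i)^2) < D^2/2"
  shows "(\<forall>t\<ge>0. phase_spread (\<phi> t) \<le> D) \<and>
         ((\<lambda>t. infdist (\<phi> t) {x. kuramoto_rhs E K w x = 0}) \<longlongrightarrow> 0) at_top"
proof -
  interpret kur_inv E K w \<phi> D
    by unfold_locales (fact graph conn Kpos wsum ode init_sum D0_pos D0_le D_le Kstar cond)+
  show ?thesis using spread_all conv by blast
qed



end
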